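(* For $n\ge2$ and $u_1,\dots,u_n\in\mathcal B$, $R_n[X(u_1),\dots,X(u_n)]=\langle R'[u_2,\dots,u_{n-1}](u_n),u_1^*\rangle_\phi=\phi\big[u_1\,R'[u_2,\dots,u_{n-1}](u_n)\big]$, where $\langle f,g\rangle_\phi=\phi[g^*f]$.
   Context: Let $\mathcal B$ be a unital $*$-algebra with star-linear maps $\phi:\mathcal B\to\mathbb C$, $\gamma:\mathcal B\to\mathcal B$, $\Lambda:\mathcal B\otimes_{alg}\mathcal B\to\mathcal B$, where $\phi$ is positive and faithful and $\gamma+\phi$ is completely positive, with $(\gamma+\phi)[b]:=\gamma[b]+\phi[b]1_{\mathcal B}$. Assume $\phi[v^*\Lambda(b\otimes u)]=\phi[\Lambda(b^*\otimes v)^*u]$ and $\gamma[v^*\Lambda(b\otimes u)]=\gamma[\Lambda(b^*\otimes v)^*u]$ for all $b,u,v$. On $\mathcal F_{alg}(\mathcal B)=\mathbb C\Omega\oplus\bigoplus_{n\ge1}\mathcal B^{\otimes n}$ use the form $\langle\Omega,\Omega\rangle_{\gamma,\phi}=1$, $\langle u_1\otimes\cdots\otimes u_n,v_1\otimes\cdots\otimes v_k\rangle_{\gamma,\phi}=\delta_{n=k}\phi[v_n^*(\gamma+\phi)[v_{n-1}^*\cdots(\gamma+\phi)[v_1^*u_1]\cdots u_{n-1}]u_n]$. For $b\in\mathcal B$: $a^+(b)\Omega=b$, $a^+(b)(u_1\otimes\cdots\otimes u_n)=b\otimes u_1\otimes\cdots\otimes u_n$; $a^-(b)\Omega=0$,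 $a^-(b)u_1=\phi[bu_1]\Omega$, $a^-(b)(u_1\otimes\cdots\otimes u_n)=(\gamma+\phi)[bu_1]u_2\otimes\cdots\otimes u_n$ ($n\ge2$); $a^0(b)\Omega=0$, $a^0(b)(u_1\otimes\cdots\otimes u_n)=\Lambda(b\otimes u_1)\otimes u_2\otimes\cdots\otimes u_n$; $X(b)=a^+(b)+a^-(b)+a^0(b)$. Free cumulants $R_k$ w.r.t. $\psi(A)=\langle A\Omega,\Omega\rangle_{\gamma,\phi}$ are defined by $\psi[Y_1\cdots Y_n]=\sum_{\pi\in\mathrm{NC}(n)}\prod_{V\in\pi}R_{|V|}[Y_{V(1)},\dots,Y_{V(|V|)}]$. The linear operators $R'[u_1,\dots,u_k]$ on $\mathcal B$ ($k\ge0$) are defined recursively: $R'[\emptyset]=\mathrm{id}_{\mathcal B}$, and $R'[u_1,\dots,u_k]=\sum_{\pi\in\mathrm{Int}(k)}w(V_1)\circ w(V_2)\circ\cdots\circ w(V_m)$, where $\mathrm{Int}(k)$ is the set of interval partitions of $\{1,\dots,k\}$, $V_1,\dots,V_m$ are the blocks of $\pi$ listed from left to right, $w(\{i\})$ is the operator $v\mapsto\Lambda(u_i\otimes v)$, and for a block $V=\{p,p+1,\dots,q\}$ with $q>p$, $w(V)$ is left multiplication by the element $\gamma\big[u_p\,R'[u_{p+1},\dots,u_{q-1}](u_q)\big]$. *)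

theory Defs
  imports Complex_Main "HOL-Library.Disjoint_Sets"
begin

definition unital_star_algebra :: "(complex \<Rightarrow> 'b::ring_1 \<Rightarrow> 'b) \<Rightarrow> ('b \<Rightarrow> 'b) \<Rightarrow> bool" where
  "unital_star_algebra smul star \<longleftrightarrow>
     (\<forall>c a b. smul c (a + b) = smul c a + smul c b) \<and>
     (\<forall>c d a. smul (c + d) a = smul c a + smul d a) \<and>
     (\<forall>c d a. smul (c * d) a = smul c (smul d a)) \<and>
     (\<forall>a. smul 1 a = a) \<and>
     (\<forall>c a b. smul c (a * b) = smul c a * b) \<and>
     (\<forall>c a b. smul c (a * b) = a * smul c b) \<and>
     (\<forall>a. star (star a) = a) \<and>
     (\<forall>a b. star (a + b) = star a + star b) \<and>
     (\<forall>c a. star (smul c a) = smul (cnj c) (star a)) \<and>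
     (\<forall>a b. star (a * b) = star b * star a)"

definition star_linear_functional ::
  "(complex \<Rightarrow> 'b::ring_1 \<Rightarrow> 'b) \<Rightarrow> ('b \<Rightarrow> 'b) \<Rightarrow> ('b \<Rightarrow> complex) \<Rightarrow> bool" where
  "star_linear_functional smul star \<phi> \<longleftrightarrow>
     (\<forall>a b. \<phi> (a + b) = \<phi> a + \<phi> b) \<and> (\<forall>c a. \<phi> (smul c a) = c * \<phi> a) \<and>
     (\<forall>a. \<phi> (star a) = cnj (\<phi> a))"

definition star_linear_map ::
  "(complex \<Rightarrow> 'b::ring_1 \<Rightarrow> 'b) \<Rightarrow> ('b \<Rightarrow> 'b) \<Rightarrow> ('b \<Rightarrow> 'b) \<Rightarrow> bool" where
  "star_linear_map smul star \<gamma> \<longleftrightarrow>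
     (\<forall>a b. \<gamma> (a + b) = \<gamma> a + \<gamma> b) \<and> (\<forall>c a. \<gamma> (smul c a) = smul c (\<gamma> a)) \<and>
     (\<forall>a. \<gamma> (star a) = star (\<gamma> a))"

text \<open>A linear map on the algebraic tensor product B (x) B is the same as a bilinear map;
  the involution on B (x) B is (b (x) u)^* = b^* (x) u^*.\<close>

definition star_bilinear_map ::
  "(complex \<Rightarrow> 'b::ring_1 \<Rightarrow> 'b) \<Rightarrow> ('b \<Rightarrow> 'b) \<Rightarrow> ('b \<Rightarrow> 'b \<Rightarrow> 'b) \<Rightarrow> bool" where
  "star_bilinear_map smul star \<Lambda> \<longleftrightarrow>
     (\<forall>a a' b. \<Lambda> (a + a') b = \<Lambda> a b + \<Lambda> a' b) \<and>
     (\<forall>a b b'. \<Lambda> a (b + b') = \<Lambda> a b + \<Lambda> a b') \<and>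
     (\<forall>c a b. \<Lambda> (smul c a) b = smul c (\<Lambda> a b)) \<and>
     (\<forall>c a b. \<Lambda> a (smul c b) = smul c (\<Lambda> a b)) \<and>
     (\<forall>a b. \<Lambda> (star a) (star b) = star (\<Lambda> a b))"

definition pos_elems :: "('b::ring_1 \<Rightarrow> 'b) \<Rightarrow> 'b set" where
  "pos_elems star = {x. \<exists>cs. x = sum_list (map (\<lambda>c. star c * c) cs)}"

definition positive_faithful :: "('b::ring_1 \<Rightarrow> 'b) \<Rightarrow> ('b \<Rightarrow> complex) \<Rightarrow> bool" where
  "positive_faithful star \<phi> \<longleftrightarrow>
     (\<forall>b. \<exists>r::real. r \<ge> 0 \<and> \<phi> (star b * b) = complex_of_real r) \<and>
     (\<forall>b. \<phi> (star b * b) = 0 \<longrightarrow> b = 0)"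

definition completely_positive :: "('b::ring_1 \<Rightarrow> 'b) \<Rightarrow> ('b \<Rightarrow> 'b) \<Rightarrow> bool" where
  "completely_positive star T \<longleftrightarrow>
     (\<forall>as bs. length as = length bs \<longrightarrow>
        (\<Sum>i<length as. \<Sum>j<length as. star (bs ! i) * T (star (as ! i) * as ! j) * bs ! j)
          \<in> pos_elems star)"

definition gp :: "(complex \<Rightarrow> 'b::ring_1 \<Rightarrow> 'b) \<Rightarrow> ('b \<Rightarrow> 'b) \<Rightarrow> ('b \<Rightarrow> complex) \<Rightarrow> 'b \<Rightarrow> 'b" where
  "gp smul \<gamma> \<phi> b = \<gamma> b + smul (\<phi> b) 1"

text \<open>Vectors of F_alg(B) are represented by formal finite linear combinations of
  words: the pair (c, [u_1,...,u_n]) stands for c (u_1 (x) ... (x) u_n), and (c, [])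
  stands for c Omega.  Vector addition is list append.  All operators below are the
  linear extensions of the given actions on elementary tensors.\<close>

type_synonym 'b fvec = "(complex \<times> 'b list) list"

definition vac :: "'b fvec" where "vac = [(1, [])]"

fun ipw :: "('b::ring_1 \<Rightarrow> 'b) \<Rightarrow> ('b \<Rightarrow> 'b) \<Rightarrow> 'b \<Rightarrow> ('b \<times> 'b) list \<Rightarrow> 'b" where
  "ipw star T acc [] = acc"
| "ipw star T acc ((u, v) # r) = ipw star T (star v * T acc * u) r"

text \<open>word_ip [u_1..u_n] [v_1..v_k] =
  delta_{n=k} phi[v_n^* T[v_{n-1}^* ... T[v_1^* u_1] ... u_{n-1}] u_n], with T = gamma+phi.\<close>

fun word_ip :: "('b::ring_1 \<Rightarrow> 'b) \<Rightarrow> ('b \<Rightarrow> 'b) \<Rightarrow> ('b \<Rightarrow> complex) \<Rightarrow> 'b list \<Rightarrow> 'b list \<Rightarrow> complex" where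
  "word_ip star T \<phi> [] [] = 1"
| "word_ip star T \<phi> (u # us) (v # vs) =
     (if length us = length vs then \<phi> (ipw star T (star v * u) (zip us vs)) else 0)"
| "word_ip star T \<phi> (u # us) [] = 0"
| "word_ip star T \<phi> [] (v # vs) = 0"

definition fock_ip ::
  "(complex \<Rightarrow> 'b::ring_1 \<Rightarrow> 'b) \<Rightarrow> ('b \<Rightarrow> 'b) \<Rightarrow> ('b \<Rightarrow> 'b) \<Rightarrow> ('b \<Rightarrow> complex)
    \<Rightarrow> 'b fvec \<Rightarrow> 'b fvec \<Rightarrow> complex" where
  "fock_ip smul star \<gamma> \<phi> \<xi> \<eta> =
     sum_list (map (\<lambda>(c, w). sum_list (map (\<lambda>(d, z). c * cnj d * word_ip star (gp smul \<gamma> \<phi>) \<phi> w z) \<eta>)) \<xi>)"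

definition a_plus :: "'b \<Rightarrow> 'b fvec \<Rightarrow> 'b fvec" where
  "a_plus b \<xi> = map (\<lambda>(c, w). (c, b # w)) \<xi>"

fun a_minus_t :: "(complex \<Rightarrow> 'b::ring_1 \<Rightarrow> 'b) \<Rightarrow> ('b \<Rightarrow> 'b) \<Rightarrow> ('b \<Rightarrow> complex) \<Rightarrow> 'b
    \<Rightarrow> complex \<times> 'b list \<Rightarrow> 'b fvec" where
  "a_minus_t smul \<gamma> \<phi> b (c, []) = []"
| "a_minus_t smul \<gamma> \<phi> b (c, [u]) = [(c * \<phi> (b * u), [])]"
| "a_minus_t smul \<gamma> \<phi> b (c, u1 # u2 # w) = [(c, gp smul \<gamma> \<phi> (b * u1) * u2 # w)]"

definition a_minus :: "(complex \<Rightarrow> 'b::ring_1 \<Rightarrow> 'b) \<Rightarrow> ('b \<Rightarrow> 'b) \<Rightarrow> ('b \<Rightarrow> complex) \<Rightarrow> 'b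
    \<Rightarrow> 'b fvec \<Rightarrow> 'b fvec" where
  "a_minus smul \<gamma> \<phi> b \<xi> = concat (map (a_minus_t smul \<gamma> \<phi> b) \<xi>)"

fun a_zero_t :: "('b \<Rightarrow> 'b \<Rightarrow> 'b) \<Rightarrow> 'b \<Rightarrow> complex \<times> 'b list \<Rightarrow> 'b fvec" where
  "a_zero_t \<Lambda> b (c, []) = []"
| "a_zero_t \<Lambda> b (c, u # w) = [(c, \<Lambda> b u # w)]"

definition a_zero :: "('b \<Rightarrow> 'b \<Rightarrow> 'b) \<Rightarrow> 'b \<Rightarrow> 'b fvec \<Rightarrow> 'b fvec" where
  "a_zero \<Lambda> b \<xi> = concat (map (a_zero_t \<Lambda> b) \<xi>)"

definition Xop :: "(complex \<Rightarrow> 'b::ring_1 \<Rightarrow> 'b) \<Rightarrow> ('b \<Rightarrow> 'b) \<Rightarrow> ('b \<Rightarrow> complex)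
    \<Rightarrow> ('b \<Rightarrow> 'b \<Rightarrow> 'b) \<Rightarrow> 'b \<Rightarrow> 'b fvec \<Rightarrow> 'b fvec" where
  "Xop smul \<gamma> \<phi> \<Lambda> b \<xi> = a_plus b \<xi> @ a_minus smul \<gamma> \<phi> b \<xi> @ a_zero \<Lambda> b \<xi>"

definition psi :: "(complex \<Rightarrow> 'b::ring_1 \<Rightarrow> 'b) \<Rightarrow> ('b \<Rightarrow> 'b) \<Rightarrow> ('b \<Rightarrow> 'b) \<Rightarrow> ('b \<Rightarrow> complex)
    \<Rightarrow> ('b fvec \<Rightarrow> 'b fvec) \<Rightarrow> complex" where
  "psi smul star \<gamma> \<phi> A = fock_ip smul star \<gamma> \<phi> (A vac) vac"

text \<open>NC(n): non-crossing partitions of {0,...,n-1} (0-based indices).\<close>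

definition NC :: "nat \<Rightarrow> nat set set set" where
  "NC n = {P. partition_on {0..<n} P \<and>
     (\<forall>V\<in>P. \<forall>W\<in>P. V \<noteq> W \<longrightarrow>
        \<not> (\<exists>a b c d. a < b \<and> b < c \<and> c < d \<and> a \<in> V \<and> c \<in> V \<and> b \<in> W \<and> d \<in> W))}"

text \<open>Interval partitions of {1..k}, listed left to right, correspond to compositions of k
  (lists of positive block sizes summing to k); chunks cuts a list into the blocks.\<close>

definition comps :: "nat \<Rightarrow> nat list set" where
  "comps k = {cs. (\<forall>c\<in>set cs. 0 < c) \<and> sum_list cs = k}"

fun chunks :: "nat list \<Rightarrow> 'a list \<Rightarrow> 'a list list" where
  "chunks [] xs = []"
| "chunks (c # cs) xs = take c xs # chunks cs (drop c xs)"

definition wblk :: "('b::ring_1 \<Rightarrow> 'b \<Rightarrow> 'b) \<Rightarrow> ('b \<Rightarrow> 'b) \<Rightarrow> ('b list \<Rightarrow> 'b \<Rightarrow> 'b)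
    \<Rightarrow> 'b list \<Rightarrow> 'b \<Rightarrow> 'b" where
  "wblk \<Lambda> \<gamma> Rrec blk v =
     (if length blk = 1 then \<Lambda> (hd blk) v
      else \<gamma> (hd blk * Rrec (butlast (tl blk)) (last blk)) * v)"

text \<open>The recursion, with a fuel argument guaranteeing termination (fuel length+1 suffices).\<close>

primrec Rfuel :: "('b::ring_1 \<Rightarrow> 'b \<Rightarrow> 'b) \<Rightarrow> ('b \<Rightarrow> 'b) \<Rightarrow> nat \<Rightarrow> 'b list \<Rightarrow> 'b \<Rightarrow> 'b" where
  "Rfuel \<Lambda> \<gamma> 0 us v = v"
| "Rfuel \<Lambda> \<gamma> (Suc f) us v =
     (if us = [] then v
      else (\<Sum>cs\<in>comps (length us).
              foldr (\<circ>) (map (wblk \<Lambda> \<gamma> (Rfuel \<Lambda> \<gamma> f)) (chunks cs us)) id v))"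

definition Rprime :: "('b::ring_1 \<Rightarrow> 'b \<Rightarrow> 'b) \<Rightarrow> ('b \<Rightarrow> 'b) \<Rightarrow> 'b list \<Rightarrow> 'b \<Rightarrow> 'b" where
  "Rprime \<Lambda> \<gamma> us = Rfuel \<Lambda> \<gamma> (Suc (length us)) us"

definition ip_phi :: "('b::ring_1 \<Rightarrow> 'b) \<Rightarrow> ('b \<Rightarrow> complex) \<Rightarrow> 'b \<Rightarrow> 'b \<Rightarrow> complex" where
  "ip_phi star \<phi> f g = \<phi> (star g * f)"

end

theory Submission
  imports Defs
begin


locale fk =
  fixes smul :: "complex \<Rightarrow> 'b::ring_1 \<Rightarrow> 'b" and star :: "'b \<Rightarrow> 'b"
    and \<phi> :: "'b \<Rightarrow> complex" and \<gamma> :: "'b \<Rightarrow> 'b" and \<Lambda> :: "'b \<Rightarrow> 'b \<Rightarrow> 'b"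
  assumes alg: "unital_star_algebra smul star"
    and phil: "star_linear_functional smul star \<phi>"
    and gaml: "star_linear_map smul star \<gamma>"
    and laml: "star_bilinear_map smul star \<Lambda>"
begin

lemma algC: "(\<forall>c a b. smul c (a + b) = smul c a + smul c b) \<and>
     (\<forall>c d a. smul (c + d) a = smul c a + smul d a) \<and>
     (\<forall>c d a. smul (c * d) a = smul c (smul d a)) \<and>
     (\<forall>a. smul 1 a = a) \<and>
     (\<forall>c a b. smul c (a * b) = smul c a * b) \<and>
     (\<forall>c a b. smul c (a * b) = a * smul c b) \<and>
     (\<forall>a. star (star a) = a) \<and>
     (\<forall>a b. star (a + b) = star a + star b) \<and>
     (\<forall>c a. star (smul c a) = smul (cnj c) (star a)) \<and>
     (\<forall>a b. star (a * b) = star b * star a)"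
  using alg unfolding unital_star_algebra_def .

lemma smul_add: "smul c (a + b) = smul c a + smul c b"
  using algC by (elim conjE allE) assumption
lemma smul_add_left: "smul (c + d) a = smul c a + smul d a"
  using algC by (elim conjE allE) assumption
lemma smul_smul: "smul c (smul d a) = smul (c * d) a"
  using algC by (elim conjE allE) (erule sym)
lemma smul_one[simp]: "smul 1 a = a"
  using algC by (elim conjE allE) assumption
lemma smul_mult_left: "smul c a * b = smul c (a * b)"
  using algC by (elim conjE allE) (erule sym)
lemma smul_mult_right: "a * smul c b = smul c (a * b)"
  using algC by (elim conjE) (drule spec[of _ c], drule spec[of _ a], drule spec[of _ b], erule sym)
lemma star_star[simp]: "star (star a) = a"
  using algC by (elim conjE allE) assumption
lemma smul_zero[simp]: "smul c 0 = 0"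
  using smul_add[of c 0 0] by simp
lemma smul_zero_left[simp]: "smul 0 a = 0"
  using smul_add_left[of 0 0 a] by simp
lemma smul_sum: "smul c (sum f A) = (\<Sum>i\<in>A. smul c (f i))"
  by (induct A rule: infinite_finite_induct) (auto simp: smul_add)
lemma smul_sum_left: "smul (sum f A) a = (\<Sum>i\<in>A. smul (f i) a)"
  by (induct A rule: infinite_finite_induct) (auto simp: smul_add_left)
lemma smul_one_mult: "smul c 1 * x = smul c x"
  by (simp add: smul_mult_left)

lemma phi_add: "\<phi> (a + b) = \<phi> a + \<phi> b"
  using phil unfolding star_linear_functional_def by blast
lemma phi_smul: "\<phi> (smul c a) = c * \<phi> a"
  using phil unfolding star_linear_functional_def by blast
lemma phi_zero[simp]: "\<phi> 0 = 0"
  using phi_add[of 0 0] by simp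
lemma phi_sum: "\<phi> (sum f A) = (\<Sum>i\<in>A. \<phi> (f i))"
  by (induct A rule: infinite_finite_induct) (auto simp: phi_add)

lemma gam_add: "\<gamma> (a + b) = \<gamma> a + \<gamma> b"
  using gaml unfolding star_linear_map_def by blast
lemma gam_smul: "\<gamma> (smul c a) = smul c (\<gamma> a)"
  using gaml unfolding star_linear_map_def by blast
lemma gam_zero[simp]: "\<gamma> 0 = 0"
  using gam_add[of 0 0] by simp
lemma gam_sum: "\<gamma> (sum f A) = (\<Sum>i\<in>A. \<gamma> (f i))"
  by (induct A rule: infinite_finite_induct) (auto simp: gam_add)

lemma lam_add: "\<Lambda> a (b + b') = \<Lambda> a b + \<Lambda> a b'"
  using laml unfolding star_bilinear_map_def by blast
lemma lam_smul: "\<Lambda> a (smul c b) = smul c (\<Lambda> a b)"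
  using laml unfolding star_bilinear_map_def by blast
lemma lam_zero[simp]: "\<Lambda> a 0 = 0"
  using lam_add[of a 0 0] by simp
lemma lam_sum: "\<Lambda> a (sum f A) = (\<Sum>i\<in>A. \<Lambda> a (f i))"
  by (induct A rule: infinite_finite_induct) (auto simp: lam_add)

abbreviation G where "G \<equiv> gp smul \<gamma> \<phi>"

lemma gp_add: "G (a + b) = G a + G b"
  by (simp add: gp_def gam_add phi_add smul_add_left add_ac)
lemma gp_smul: "G (smul c a) = smul c (G a)"
  by (simp add: gp_def gam_smul phi_smul smul_add smul_smul)
lemma gp_zero[simp]: "G 0 = 0"
  using gp_add[of 0 0] by simp
lemma gp_mult: "G x * v = \<gamma> x * v + smul (\<phi> x) v"
  by (simp add: gp_def distrib_right smul_one_mult)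

abbreviation Xo where "Xo \<equiv> Xop smul \<gamma> \<phi> \<Lambda>"

definition Fv :: "'b list \<Rightarrow> 'b fvec \<Rightarrow> complex" where
  "Fv us \<xi> = fock_ip smul star \<gamma> \<phi> (foldr (\<circ>) (map Xo us) id \<xi>) vac"

definition F :: "'b list \<Rightarrow> 'b list \<Rightarrow> complex" where
  "F us w = Fv us [(1, w)]"

lemma word_ip_Nil2: "word_ip st T ph w [] = (if w = [] then 1 else 0)"
  by (cases w) auto

lemma fock_ip_vac: "fock_ip smul star \<gamma> \<phi> \<xi> vac = sum_list (map (\<lambda>(c, w). if w = [] then c else 0) \<xi>)"
  unfolding fock_ip_def vac_def
  by (induct \<xi>) (auto simp: word_ip_Nil2)

lemma foldr_comp_gen: "foldr (\<circ>) fs g = foldr (\<circ>) fs id \<circ> g"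
  by (induct fs) auto

lemma Fv_snoc: "Fv (us @ [u]) \<xi> = Fv us (Xo u \<xi>)"
  unfolding Fv_def by (simp add: foldr_comp_gen[of _ "Xo u"])

lemma Fv_Nil: "Fv [] \<xi> = sum_list (map (\<lambda>(c, w). if w = [] then c else 0) \<xi>)"
  unfolding Fv_def by (simp add: fock_ip_vac)

lemma a_plus_append: "a_plus u (\<xi>1 @ \<xi>2) = a_plus u \<xi>1 @ a_plus u \<xi>2"
  by (simp add: a_plus_def)
lemma a_minus_append: "a_minus smul \<gamma> \<phi> u (\<xi>1 @ \<xi>2) = a_minus smul \<gamma> \<phi> u \<xi>1 @ a_minus smul \<gamma> \<phi> u \<xi>2"
  by (simp add: a_minus_def)
lemma a_zero_append: "a_zero \<Lambda> u (\<xi>1 @ \<xi>2) = a_zero \<Lambda> u \<xi>1 @ a_zero \<Lambda> u \<xi>2"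
  by (simp add: a_zero_def)

lemma Fv_append: "Fv us (\<xi>1 @ \<xi>2) = Fv us \<xi>1 + Fv us \<xi>2"
proof (induct us arbitrary: \<xi>1 \<xi>2 rule: rev_induct)
  case Nil
  then show ?case by (simp add: Fv_Nil)
next
  case (snoc u us)
  have "Fv (us @ [u]) (\<xi>1 @ \<xi>2) = Fv us (Xo u (\<xi>1 @ \<xi>2))" by (simp add: Fv_snoc)
  also have "\<dots> = Fv (us @ [u]) \<xi>1 + Fv (us @ [u]) \<xi>2"
    unfolding Fv_snoc Xop_def by (simp add: snoc add_ac a_plus_append a_minus_append a_zero_append)
  finally show ?case .
qed

lemma Xo_Nil[simp]: "Xo u [] = []"
  by (simp add: Xop_def a_plus_def a_minus_def a_zero_def)

lemma Fv_empty[simp]: "Fv us [] = 0"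
  by (induct us rule: rev_induct) (auto simp: Fv_Nil Fv_snoc)

definition scl :: "complex \<Rightarrow> complex \<times> 'b list \<Rightarrow> complex \<times> 'b list" where
  "scl c = (\<lambda>(d, w). (c * d, w))"

lemma a_minus_t_scl: "a_minus_t smul \<gamma> \<phi> b (scl c t) = map (scl c) (a_minus_t smul \<gamma> \<phi> b t)"
proof -
  obtain d w where t: "t = (d, w)" by (cases t)
  show ?thesis unfolding t scl_def
    by (cases w rule: remdups_adj.cases) auto
qed

lemma a_zero_t_scl: "a_zero_t \<Lambda> b (scl c t) = map (scl c) (a_zero_t \<Lambda> b t)"
proof -
  obtain d w where t: "t = (d, w)" by (cases t)
  show ?thesis unfolding t scl_def
    by (cases w) auto
qed

lemma Xo_scl: "Xo u (map (scl c) \<xi>) = map (scl c) (Xo u \<xi>)"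
proof -
  have 1: "a_minus smul \<gamma> \<phi> u (map (scl c) \<xi>) = map (scl c) (a_minus smul \<gamma> \<phi> u \<xi>)"
    unfolding a_minus_def by (simp add: a_minus_t_scl map_concat comp_def)
  have 2: "a_zero \<Lambda> u (map (scl c) \<xi>) = map (scl c) (a_zero \<Lambda> u \<xi>)"
    unfolding a_zero_def by (simp add: a_zero_t_scl map_concat comp_def)
  have 3: "a_plus u (map (scl c) \<xi>) = map (scl c) (a_plus u \<xi>)"
    unfolding a_plus_def by (simp add: scl_def comp_def split_def)
  show ?thesis unfolding Xop_def 1 2 3 by simp
qed

lemma Fv_scl: "Fv us (map (scl c) \<xi>) = c * Fv us \<xi>"
proof (induct us arbitrary: \<xi> rule: rev_induct)
  case Nil
  then show ?case by (induct \<xi>) (auto simp: Fv_Nil scl_def distrib_left split: prod.splits)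
next
  case (snoc u us)
  then show ?case by (simp add: Fv_snoc Xo_scl)
qed

lemma Fv_single: "Fv us [(c, w)] = c * F us w"
  using Fv_scl[of us c "[(1, w)]"] by (simp add: F_def scl_def)

lemma F_Nil: "F [] w = (if w = [] then 1 else 0)"
  by (simp add: F_def Fv_Nil)

lemma F_snoc_Nil: "F (us @ [u]) [] = F us [u]"
proof -
  have "Xo u [(1, [])] = [(1, [u])]" by (simp add: Xop_def a_plus_def a_minus_def a_zero_def)
  then show ?thesis by (simp add: F_def Fv_snoc)
qed

lemma F_snoc_one: "F (us @ [u]) [x] = F us [u, x] + \<phi> (u * x) * F us [] + F us [\<Lambda> u x]"
proof -
  have "Xo u [(1, [x])] = [(1, [u, x])] @ [(\<phi> (u * x), [])] @ [(1, [\<Lambda> u x])]"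
    by (simp add: Xop_def a_plus_def a_minus_def a_zero_def)
  moreover have "F (us @ [u]) w = Fv us (Xo u [(1, w)])" for w by (simp add: F_def Fv_snoc)
  ultimately show ?thesis by (simp only: Fv_append Fv_single mult_1 add.assoc)
qed

lemma F_snoc_two: "F (us @ [u]) (x # y # r) = F us (u # x # y # r) + F us (G (u * x) * y # r) + F us (\<Lambda> u x # y # r)"
proof -
  have "Xo u [(1, x # y # r)] = [(1, u # x # y # r)] @ [(1, G (u * x) * y # r)] @ [(1, \<Lambda> u x # y # r)]"
    by (simp add: Xop_def a_plus_def a_minus_def a_zero_def)
  moreover have "F (us @ [u]) w = Fv us (Xo u [(1, w)])" for w by (simp add: F_def Fv_snoc)
  ultimately show ?thesis by (simp only: Fv_append Fv_single mult_1 add.assoc)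
qed

end


lemma chunks_append: "chunks (cs @ [c]) xs = chunks cs xs @ [take c (drop (sum_list cs) xs)]"
  by (induct cs arbitrary: xs) (auto simp: add.commute)

lemma chunks_take: "sum_list cs \<le> k \<Longrightarrow> chunks cs (take k xs) = chunks cs xs"
proof (induct cs arbitrary: xs k)
  case Nil
  then show ?case by simp
next
  case (Cons c cs)
  then have "chunks cs (take (k - c) (drop c xs)) = chunks cs (drop c xs)" by simp
  with Cons.prems show ?case by (simp add: drop_take min_def)
qed

lemma chunks_len: "blk \<in> set (chunks cs xs) \<Longrightarrow> length blk \<le> length xs"
  by (induct cs arbitrary: xs) (auto, fastforce)

lemma comps_0: "comps 0 = {[]}"
  by (auto simp: comps_def) (metis list.set_intros(1) neq_Nil_conv not_less_zero)

lemma comps_Suc: "comps (Suc k) = (\<Union>p<Suc k. (\<lambda>cs. cs @ [Suc k - p]) ` comps p)"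
proof
  show "comps (Suc k) \<subseteq> (\<Union>p<Suc k. (\<lambda>cs. cs @ [Suc k - p]) ` comps p)"
  proof
    fix cs assume cs: "cs \<in> comps (Suc k)"
    then have "cs \<noteq> []" by (auto simp: comps_def)
    then obtain cs' c where e: "cs = cs' @ [c]" by (metis rev_exhaust)
    with cs have c0: "0 < c" and s: "sum_list cs' + c = Suc k" and pos: "\<forall>x\<in>set cs'. 0 < x"
      by (auto simp: comps_def)
    then have "sum_list cs' < Suc k" "c = Suc k - sum_list cs'" by auto
    moreover have "cs' \<in> comps (sum_list cs')" using pos by (simp add: comps_def)
    ultimately show "cs \<in> (\<Union>p<Suc k. (\<lambda>cs. cs @ [Suc k - p]) ` comps p)"
      unfolding e by blast
  qed
next
  show "(\<Union>p<Suc k. (\<lambda>cs. cs @ [Suc k - p]) ` comps p) \<subseteq> comps (Suc k)"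
    by (auto simp: comps_def)
qed

lemma finite_comps: "finite (comps k)"
proof (induct k rule: less_induct)
  case (less k)
  show ?case
  proof (cases k)
    case 0
    then show ?thesis by (simp add: comps_0)
  next
    case (Suc k')
    then show ?thesis using less by (simp add: comps_Suc)
  qed
qed

lemma sum_comps_Suc:
  fixes h :: "nat list \<Rightarrow> 'a::comm_monoid_add"
  shows "(\<Sum>cs\<in>comps (Suc k). h cs) = (\<Sum>p<Suc k. \<Sum>cs\<in>comps p. h (cs @ [Suc k - p]))"
proof -
  have "(\<Sum>cs\<in>comps (Suc k). h cs) = (\<Sum>p<Suc k. \<Sum>cs\<in>(\<lambda>cs. cs @ [Suc k - p]) ` comps p. h cs)"
    unfolding comps_Suc
  proof (rule sum.UNION_disjoint)
    show "finite {..<Suc k}" by simp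
    show "\<forall>i\<in>{..<Suc k}. finite ((\<lambda>cs. cs @ [Suc k - i]) ` comps i)" by (simp add: finite_comps)
    show "\<forall>i\<in>{..<Suc k}. \<forall>j\<in>{..<Suc k}. i \<noteq> j \<longrightarrow>
      (\<lambda>cs. cs @ [Suc k - i]) ` comps i \<inter> (\<lambda>cs. cs @ [Suc k - j]) ` comps j = {}"
      by auto
  qed
  also have "\<dots> = (\<Sum>p<Suc k. \<Sum>cs\<in>comps p. h (cs @ [Suc k - p]))"
    by (rule sum.cong) (auto simp: sum.reindex inj_on_def)
  finally show ?thesis .
qed

lemma Rfuel_Suc: "Rfuel L g (Suc f) us v =
   (\<Sum>cs\<in>comps (length us). foldr (\<circ>) (map (wblk L g (Rfuel L g f)) (chunks cs us)) id v)"
  by (cases "us = []") (auto simp: comps_0)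

lemma Rfuel_indep: "length us < f \<Longrightarrow> length us < f' \<Longrightarrow> Rfuel L g f us = Rfuel L g f' us"
proof (induct "length us" arbitrary: us f f' rule: less_induct)
  case less
  obtain f0 where f0: "f = Suc f0" using less.prems by (cases f) auto
  obtain f0' where f0': "f' = Suc f0'" using less.prems by (cases f') auto
  show ?case
  proof (cases "us = []")
    case True
    then show ?thesis unfolding f0 f0' by (simp add: fun_eq_iff)
  next
    case False
    have w: "wblk L g (Rfuel L g f0) blk = wblk L g (Rfuel L g f0') blk"
      if "blk \<in> set (chunks cs us)" for cs blk
    proof -
      have "length blk \<le> length us" using chunks_len[OF that] .
      then have "length (butlast (tl blk)) < length us" "length (butlast (tl blk)) < f0"
        "length (butlast (tl blk)) < f0'"
        using False less.prems f0 f0' by (auto simp: neq_Nil_conv)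
      then have "Rfuel L g f0 (butlast (tl blk)) = Rfuel L g f0' (butlast (tl blk))"
        using less.hyps by blast
      then show ?thesis by (simp add: wblk_def fun_eq_iff)
    qed
    have m: "map (wblk L g (Rfuel L g f0)) (chunks cs us) = map (wblk L g (Rfuel L g f0')) (chunks cs us)" for cs
      by (rule map_cong[OF refl w])
    show ?thesis unfolding f0 f0'
      by (rule ext, simp only: Rfuel_Suc m)
  qed
qed

lemma Rfuel_Rprime: "length us < f \<Longrightarrow> Rfuel L g f us = Rprime L g us"
  unfolding Rprime_def by (rule Rfuel_indep) auto

lemma Rprime_Nil[simp]: "Rprime L g [] v = v"
  by (simp add: Rprime_def)

lemma foldr_comp_snoc: "foldr (\<circ>) (map W (A @ [B])) id v = foldr (\<circ>) (map W A) id (W B v)"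
proof -
  have "foldr (\<circ>) fs g = foldr (\<circ>) fs id \<circ> g" for fs :: "('x \<Rightarrow> 'x) list" and g
    by (induct fs) auto
  from this[of "map W A" "W B"] show ?thesis by (simp del: foldr_map)
qed

lemma Rprime_snoc: "Rprime L g (ms @ [u]) v = Rprime L g ms (L u v) +
   (\<Sum>p<length ms. Rprime L g (take p ms) (g (ms ! p * Rprime L g (drop (Suc p) ms) u) * v))"
proof -
  define k where "k = length ms"
  define W where "W = wblk L g (Rfuel L g (Suc k))"
  have "Rprime L g (ms @ [u]) v = Rfuel L g (Suc (Suc k)) (ms @ [u]) v"
    by (simp add: Rprime_def k_def)
  also have "\<dots> = (\<Sum>cs\<in>comps (Suc k). foldr (\<circ>) (map W (chunks cs (ms @ [u]))) id v)"
    by (simp only: Rfuel_Suc W_def) (simp add: k_def)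
  also have "\<dots> = (\<Sum>p<Suc k. \<Sum>cs\<in>comps p. foldr (\<circ>) (map W (chunks (cs @ [Suc k - p]) (ms @ [u]))) id v)"
    by (rule sum_comps_Suc)
  also have "\<dots> = (\<Sum>p<Suc k. Rprime L g (take p ms) (W (drop p ms @ [u]) v))"
  proof (rule sum.cong[OF refl])
    fix p assume p: "p \<in> {..<Suc k}"
    have "(\<Sum>cs\<in>comps p. foldr (\<circ>) (map W (chunks (cs @ [Suc k - p]) (ms @ [u]))) id v)
        = (\<Sum>cs\<in>comps p. foldr (\<circ>) (map W (chunks cs (take p ms))) id (W (drop p ms @ [u]) v))"
    proof (rule sum.cong[OF refl])
      fix cs assume cs: "cs \<in> comps p"
      then have s: "sum_list cs = p" by (simp add: comps_def)
      have "chunks (cs @ [Suc k - p]) (ms @ [u]) = chunks cs (take p ms) @ [drop p ms @ [u]]"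
        using p s chunks_take[of cs p "ms @ [u]"] by (simp add: chunks_append k_def)
      then show "foldr (\<circ>) (map W (chunks (cs @ [Suc k - p]) (ms @ [u]))) id v
          = foldr (\<circ>) (map W (chunks cs (take p ms))) id (W (drop p ms @ [u]) v)"
        by (simp only: foldr_comp_snoc)
    qed
    also have "\<dots> = Rfuel L g (Suc (Suc k)) (take p ms) (W (drop p ms @ [u]) v)"
    proof -
      have lp: "length (take p ms) = p" using p by (simp add: k_def)
      show ?thesis by (simp only: Rfuel_Suc W_def lp)
    qed
    also have "\<dots> = Rprime L g (take p ms) (W (drop p ms @ [u]) v)"
      using p by (subst Rfuel_Rprime) (auto simp: k_def)
    finally show "(\<Sum>cs\<in>comps p. foldr (\<circ>) (map W (chunks (cs @ [Suc k - p]) (ms @ [u]))) id v)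
        = Rprime L g (take p ms) (W (drop p ms @ [u]) v)" .
  qed
  also have "\<dots> = (\<Sum>p<k. Rprime L g (take p ms) (W (drop p ms @ [u]) v)) + Rprime L g ms (L u v)"
    by (simp add: W_def wblk_def k_def)
  also have "(\<Sum>p<k. Rprime L g (take p ms) (W (drop p ms @ [u]) v))
      = (\<Sum>p<length ms. Rprime L g (take p ms) (g (ms ! p * Rprime L g (drop (Suc p) ms) u) * v))"
  proof (rule sum.cong)
    show "{..<k} = {..<length ms}" by (simp add: k_def)
  next
    fix p assume p: "p \<in> {..<length ms}"
    then have e: "drop p ms @ [u] = ms ! p # (drop (Suc p) ms @ [u])"
      by (simp add: Cons_nth_drop_Suc)
    have "Rfuel L g (Suc k) (drop (Suc p) ms) = Rprime L g (drop (Suc p) ms)"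
      by (rule Rfuel_Rprime) (auto simp: k_def)
    then show "Rprime L g (take p ms) (W (drop p ms @ [u]) v) =
       Rprime L g (take p ms) (g (ms ! p * Rprime L g (drop (Suc p) ms) u) * v)"
      unfolding e W_def wblk_def by simp
  qed
  finally show ?thesis by (simp add: add.commute)
qed


lemma sum_triangle_reindex:
  fixes h :: "nat \<Rightarrow> nat \<Rightarrow> 'a::comm_monoid_add"
  shows "(\<Sum>p'<L. \<Sum>p<p'. h p p') = (\<Sum>p<L. \<Sum>q<L - Suc p. h p (Suc p + q))"
proof (induct L)
  case 0
  then show ?case by simp
next
  case (Suc L)
  have "(\<Sum>p<Suc L. \<Sum>q<Suc L - Suc p. h p (Suc p + q)) = (\<Sum>p<L. \<Sum>q<Suc L - Suc p. h p (Suc p + q))"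
    by simp
  also have "\<dots> = (\<Sum>p<L. (\<Sum>q<L - Suc p. h p (Suc p + q)) + h p L)"
  proof (rule sum.cong[OF refl])
    fix p assume "p \<in> {..<L}"
    then have e: "Suc L - Suc p = Suc (L - Suc p)" and e2: "Suc (p + (L - Suc p)) = L" by auto
    show "(\<Sum>q<Suc L - Suc p. h p (Suc p + q)) = (\<Sum>q<L - Suc p. h p (Suc p + q)) + h p L"
      unfolding e by (simp add: e2)
  qed
  also have "\<dots> = (\<Sum>p'<L. \<Sum>p<p'. h p p') + (\<Sum>p<L. h p L)"
    by (simp add: sum.distrib Suc)
  finally show ?case by simp
qed

context fk
begin

lemma F_add: "F us (pre @ (a + b) # post) = F us (pre @ a # post) + F us (pre @ b # post)"
proof (induct us arbitrary: pre a b post rule: rev_induct)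
  case Nil
  then show ?case by (simp add: F_Nil)
next
  case (snoc u us)
  note IH = snoc
  show ?case
  proof (cases pre)
    case Nil
    show ?thesis
    proof (cases post)
      case Nil
      have 1: "F us [u, a + b] = F us [u, a] + F us [u, b]" using IH[of "[u]" a b "[]"] by simp
      have 2: "F us [\<Lambda> u (a + b)] = F us [\<Lambda> u a] + F us [\<Lambda> u b]"
        using IH[of "[]" "\<Lambda> u a" "\<Lambda> u b" "[]"] by (simp add: lam_add)
      show ?thesis unfolding \<open>pre = []\<close> Nil
        by (simp only: append.simps F_snoc_one 1 2) (simp add: distrib_left phi_add algebra_simps)
    next
      case (Cons y r)
      have 1: "F us (u # (a + b) # y # r) = F us (u # a # y # r) + F us (u # b # y # r)"
        using IH[of "[u]" a b "y # r"] by simp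
      have 2: "F us (G (u * (a + b)) * y # r) = F us (G (u * a) * y # r) + F us (G (u * b) * y # r)"
        using IH[of "[]" "G (u * a) * y" "G (u * b) * y" r] unfolding distrib_left gp_add distrib_right by simp
      have 3: "F us (\<Lambda> u (a + b) # y # r) = F us (\<Lambda> u a # y # r) + F us (\<Lambda> u b # y # r)"
        using IH[of "[]" "\<Lambda> u a" "\<Lambda> u b" "y # r"] by (simp add: lam_add)
      show ?thesis unfolding \<open>pre = []\<close> Cons
        by (simp only: append.simps F_snoc_two 1 2 3) (simp add: algebra_simps)
    qed
  next
    case (Cons x pre')
    show ?thesis
    proof (cases pre')
      case Nil
      have 1: "F us (u # x # (a + b) # post) = F us (u # x # a # post) + F us (u # x # b # post)"
        using IH[of "[u, x]" a b post] by simp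
      have 2: "F us (G (u * x) * (a + b) # post) = F us (G (u * x) * a # post) + F us (G (u * x) * b # post)"
        using IH[of "[]" "G (u * x) * a" "G (u * x) * b" post] by (simp add: distrib_left)
      have 3: "F us (\<Lambda> u x # (a + b) # post) = F us (\<Lambda> u x # a # post) + F us (\<Lambda> u x # b # post)"
        using IH[of "[\<Lambda> u x]" a b post] by simp
      show ?thesis unfolding \<open>pre = x # pre'\<close> Nil
        by (simp only: append.simps F_snoc_two 1 2 3) (simp add: algebra_simps)
    next
      case (Cons y r)
      have 1: "F us (u # x # y # r @ (a + b) # post) = F us (u # x # y # r @ a # post) + F us (u # x # y # r @ b # post)"
        using IH[of "u # x # y # r" a b post] by simp
      have 2: "F us (G (u * x) * y # r @ (a + b) # post) = F us (G (u * x) * y # r @ a # post) + F us (G (u * x) * y # r @ b # post)"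
        using IH[of "G (u * x) * y # r" a b post] by simp
      have 3: "F us (\<Lambda> u x # y # r @ (a + b) # post) = F us (\<Lambda> u x # y # r @ a # post) + F us (\<Lambda> u x # y # r @ b # post)"
        using IH[of "\<Lambda> u x # y # r" a b post] by simp
      show ?thesis unfolding \<open>pre = x # pre'\<close> Cons
        by (simp only: append.simps F_snoc_two 1 2 3) (simp add: algebra_simps)
    qed
  qed
qed

lemma F_zero: "F us (pre @ 0 # post) = 0"
  using F_add[of us pre 0 0 post] by simp

lemma F_sum: "F us (pre @ sum f A # post) = (\<Sum>i\<in>A. F us (pre @ f i # post))"
  by (induct A rule: infinite_finite_induct) (auto simp: F_zero F_add)

lemma Rp_add: "Rprime \<Lambda> g us (a + b) = Rprime \<Lambda> g us a + Rprime \<Lambda> g us b"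
proof (induct "length us" arbitrary: us a b rule: less_induct)
  case less
  show ?case
  proof (cases us rule: rev_cases)
    case Nil
    then show ?thesis by simp
  next
    case (snoc ms u)
    have IH: "Rprime \<Lambda> g ys (x + y) = Rprime \<Lambda> g ys x + Rprime \<Lambda> g ys y" if "length ys < length us" for ys x y
      using less that by blast
    have IH2: "Rprime \<Lambda> g (take p ms) (x + y) = Rprime \<Lambda> g (take p ms) x + Rprime \<Lambda> g (take p ms) y" for p x y
      by (rule IH) (simp add: snoc)
    have IH3: "Rprime \<Lambda> g ms (x + y) = Rprime \<Lambda> g ms x + Rprime \<Lambda> g ms y" for x y
      by (rule IH) (simp add: snoc)
    show ?thesis unfolding snoc Rprime_snoc
      by (simp add: lam_add IH2 IH3 distrib_left sum.distrib algebra_simps)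
  qed
qed

lemma Rp_smul: "Rprime \<Lambda> g us (smul c a) = smul c (Rprime \<Lambda> g us a)"
proof (induct "length us" arbitrary: us a rule: less_induct)
  case less
  show ?case
  proof (cases us rule: rev_cases)
    case Nil
    then show ?thesis by simp
  next
    case (snoc ms u)
    have IH: "Rprime \<Lambda> g ys (smul c x) = smul c (Rprime \<Lambda> g ys x)" if "length ys < length us" for ys x
      using less that by blast
    have IH2: "Rprime \<Lambda> g (take p ms) (smul c x) = smul c (Rprime \<Lambda> g (take p ms) x)" for p x
      by (rule IH) (simp add: snoc)
    have IH3: "Rprime \<Lambda> g ms (smul c x) = smul c (Rprime \<Lambda> g ms x)" for x
      by (rule IH) (simp add: snoc)
    show ?thesis unfolding snoc Rprime_snoc
      by (simp add: lam_smul IH2 IH3 smul_mult_right smul_add smul_sum)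
  qed
qed

lemma Rp_zero[simp]: "Rprime \<Lambda> g us 0 = 0"
  using Rp_add[of g us 0 0] by simp

lemma Rp_sum: "Rprime \<Lambda> g us (sum f A) = (\<Sum>i\<in>A. Rprime \<Lambda> g us (f i))"
  by (induct A rule: infinite_finite_induct) (auto simp: Rp_add)

definition Aterm :: "'b list \<Rightarrow> nat \<Rightarrow> 'b \<Rightarrow> 'b list \<Rightarrow> complex" where
  "Aterm us p x \<rho> = (case \<rho> of [] \<Rightarrow> \<phi> (us ! p * x) * F (take p us) []
      | y # \<rho>' \<Rightarrow> F (take p us) (G (us ! p * x) * y # \<rho>'))"

lemma Aterm_add: "Aterm us p (x1 + x2) \<rho> = Aterm us p x1 \<rho> + Aterm us p x2 \<rho>"
proof (cases \<rho>)
  case Nil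
  then show ?thesis by (simp add: Aterm_def distrib_left phi_add distrib_right)
next
  case (Cons y r)
  then show ?thesis using F_add[of "take p us" "[]" "G (us ! p * x1) * y" "G (us ! p * x2) * y" r]
    by (simp add: Aterm_def distrib_left gp_add distrib_right)
qed

lemma Aterm_zero: "Aterm us p 0 \<rho> = 0"
  using Aterm_add[of us p 0 0 \<rho>] by simp

lemma Aterm_sum: "Aterm us p (sum f A) \<rho> = (\<Sum>i\<in>A. Aterm us p (f i) \<rho>)"
  by (induct A rule: infinite_finite_induct) (auto simp: Aterm_zero Aterm_add)

lemma Aterm_take: "p < q \<Longrightarrow> p < length us \<Longrightarrow> Aterm (take q us) p x \<rho> = Aterm us p x \<rho>"
  by (simp add: Aterm_def min_def split: list.splits)

lemma Aterm_snoc: "p < length ms \<Longrightarrow> Aterm (ms @ [u]) p x \<rho> = Aterm ms p x \<rho>"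
  by (simp add: Aterm_def nth_append split: list.splits)

theorem F_decomp: "F us (v # \<rho>) = (\<Sum>p<length us. Aterm us p (Rprime \<Lambda> G (drop (Suc p) us) v) \<rho>)"
proof (induct "length us" arbitrary: us v \<rho> rule: less_induct)
  case less
  show ?case
  proof (cases us rule: rev_cases)
    case Nil
    then show ?thesis by (simp add: F_Nil)
  next
    case (snoc ms u)
    define L where "L = length ms"
    have IH: "F ys (x # r) = (\<Sum>p<length ys. Aterm ys p (Rprime \<Lambda> G (drop (Suc p) ys) x) r)"
      if "length ys < length us" for ys x r
      using less that by blast
    define AM where "AM = (case \<rho> of [] \<Rightarrow> \<phi> (u * v) * F ms [] | y # r \<Rightarrow> F ms (G (u * v) * y # r))"
    have lhs: "F us (v # \<rho>) = F ms (u # v # \<rho>) + AM + F ms (\<Lambda> u v # \<rho>)"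
      unfolding snoc AM_def by (cases \<rho>) (simp_all add: F_snoc_one F_snoc_two)
    have "(\<Sum>p<length us. Aterm us p (Rprime \<Lambda> G (drop (Suc p) us) v) \<rho>)
       = (\<Sum>p<L. Aterm ms p (Rprime \<Lambda> G (drop (Suc p) ms @ [u]) v) \<rho>) + AM"
    proof -
      have "Aterm (ms @ [u]) L (Rprime \<Lambda> G (drop (Suc L) (ms @ [u])) v) \<rho> = AM"
        unfolding AM_def Aterm_def L_def by (simp split: list.splits)
      moreover have "Aterm (ms @ [u]) p (Rprime \<Lambda> G (drop (Suc p) (ms @ [u])) v) \<rho>
          = Aterm ms p (Rprime \<Lambda> G (drop (Suc p) ms @ [u]) v) \<rho>" if "p < L" for p
        using that by (simp add: Aterm_snoc L_def)
      ultimately show ?thesis unfolding snoc by (simp add: L_def)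
    qed
    also have "\<dots> = (\<Sum>p<L. Aterm ms p (Rprime \<Lambda> G (drop (Suc p) ms) (\<Lambda> u v)) \<rho>)
       + (\<Sum>p<L. \<Sum>q<L - Suc p. Aterm ms p (Rprime \<Lambda> G (take q (drop (Suc p) ms))
            (G ((drop (Suc p) ms) ! q * Rprime \<Lambda> G (drop (Suc q) (drop (Suc p) ms)) u) * v)) \<rho>) + AM"
      by (simp add: Rprime_snoc Aterm_add Aterm_sum sum.distrib L_def)
    also have "(\<Sum>p<L. Aterm ms p (Rprime \<Lambda> G (drop (Suc p) ms) (\<Lambda> u v)) \<rho>) = F ms (\<Lambda> u v # \<rho>)"
      using IH[of ms "\<Lambda> u v" \<rho>] by (simp add: snoc L_def)
    also have "(\<Sum>p<L. \<Sum>q<L - Suc p. Aterm ms p (Rprime \<Lambda> G (take q (drop (Suc p) ms))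
            (G ((drop (Suc p) ms) ! q * Rprime \<Lambda> G (drop (Suc q) (drop (Suc p) ms)) u) * v)) \<rho>)
       = (\<Sum>p'<L. \<Sum>p<p'. Aterm ms p (Rprime \<Lambda> G (drop (Suc p) (take p' ms))
            (G (ms ! p' * Rprime \<Lambda> G (drop (Suc p') ms) u) * v)) \<rho>)"
    proof -
      have "(\<Sum>p'<L. \<Sum>p<p'. Aterm ms p (Rprime \<Lambda> G (drop (Suc p) (take p' ms))
            (G (ms ! p' * Rprime \<Lambda> G (drop (Suc p') ms) u) * v)) \<rho>)
        = (\<Sum>p<L. \<Sum>q<L - Suc p. Aterm ms p (Rprime \<Lambda> G (drop (Suc p) (take (Suc p + q) ms))
            (G (ms ! (Suc p + q) * Rprime \<Lambda> G (drop (Suc (Suc p + q)) ms) u) * v)) \<rho>)"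
        by (rule sum_triangle_reindex)
      also have "\<dots> = (\<Sum>p<L. \<Sum>q<L - Suc p. Aterm ms p (Rprime \<Lambda> G (take q (drop (Suc p) ms))
            (G ((drop (Suc p) ms) ! q * Rprime \<Lambda> G (drop (Suc q) (drop (Suc p) ms)) u) * v)) \<rho>)"
      proof (intro sum.cong refl)
        fix p q assume p: "p \<in> {..<L}" and q: "q \<in> {..<L - Suc p}"
        then have "Suc p \<le> length ms" by (simp add: L_def)
        then show "Aterm ms p (Rprime \<Lambda> G (drop (Suc p) (take (Suc p + q) ms))
            (G (ms ! (Suc p + q) * Rprime \<Lambda> G (drop (Suc (Suc p + q)) ms) u) * v)) \<rho>
          = Aterm ms p (Rprime \<Lambda> G (take q (drop (Suc p) ms))
            (G ((drop (Suc p) ms) ! q * Rprime \<Lambda> G (drop (Suc q) (drop (Suc p) ms)) u) * v)) \<rho>"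
          by (simp add: drop_take nth_drop add.commute)
      qed
      finally show ?thesis by simp
    qed
    also have "\<dots> = F ms (u # v # \<rho>)"
    proof -
      have "F ms (u # v # \<rho>) = (\<Sum>p'<L. F (take p' ms) (G (ms ! p' * Rprime \<Lambda> G (drop (Suc p') ms) u) * v # \<rho>))"
        using IH[of ms u "v # \<rho>"] by (simp add: snoc L_def Aterm_def)
      also have "\<dots> = (\<Sum>p'<L. \<Sum>p<p'. Aterm ms p (Rprime \<Lambda> G (drop (Suc p) (take p' ms))
            (G (ms ! p' * Rprime \<Lambda> G (drop (Suc p') ms) u) * v)) \<rho>)"
      proof (rule sum.cong[OF refl])
        fix p' assume p': "p' \<in> {..<L}"
        then have lt: "length (take p' ms) < length us" and lt2: "length (take p' ms) = p'"
          by (auto simp: snoc L_def)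
        show "F (take p' ms) (G (ms ! p' * Rprime \<Lambda> G (drop (Suc p') ms) u) * v # \<rho>) =
          (\<Sum>p<p'. Aterm ms p (Rprime \<Lambda> G (drop (Suc p) (take p' ms))
            (G (ms ! p' * Rprime \<Lambda> G (drop (Suc p') ms) u) * v)) \<rho>)"
          unfolding IH[OF lt] lt2
          by (rule sum.cong[OF refl], rule Aterm_take) (use p' in \<open>auto simp: L_def\<close>)
      qed
      finally show ?thesis by simp
    qed
    finally show ?thesis unfolding lhs by (simp add: algebra_simps)
  qed
qed

end


lemma nths_snoc: "nths (xs @ [x]) A = nths xs A @ (if length xs \<in> A then [x] else [])"
  by (simp add: nths_append)

lemma nths_none: "\<forall>i\<in>B. length xs \<le> i \<Longrightarrow> nths xs B = []"
proof -
  assume a: "\<forall>i\<in>B. length xs \<le> i"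
  have "{i. i < length xs \<and> i \<in> B} = {}" using a by force
  then have "length (nths xs B) = 0" by (simp add: length_nths)
  then show ?thesis by simp
qed

lemma nths_union: "\<forall>a\<in>A. \<forall>b\<in>B. a < b \<Longrightarrow> nths xs (A \<union> B) = nths xs A @ nths xs B"
proof (induct xs rule: rev_induct)
  case Nil
  then show ?case by simp
next
  case (snoc x xs)
  show ?case
  proof (cases "length xs \<in> A")
    case True
    then have "length xs \<notin> B" "\<forall>i\<in>B. length xs \<le> i" using snoc.prems by force+
    then show ?thesis using snoc True by (simp add: nths_snoc nths_none)
  next
    case False
    then show ?thesis using snoc by (simp add: nths_snoc)
  qed
qed

lemma nths_single: "i < length xs \<Longrightarrow> nths xs {i} = [xs ! i]"
proof (induct xs rule: rev_induct)
  case Nil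
  then show ?case by simp
next
  case (snoc x xs)
  then show ?case
    by (cases "i = length xs") (auto simp: nths_snoc nth_append nths_none)
qed

lemma nths_length: "A \<subseteq> {..<length xs} \<Longrightarrow> length (nths xs A) = card A"
proof -
  assume "A \<subseteq> {..<length xs}"
  then have "{i. i < length xs \<and> i \<in> A} = A" by auto
  then show ?thesis by (simp add: length_nths)
qed

lemma nths_split3:
  assumes "p \<in> G" "G \<subseteq> {..<length xs}"
  shows "nths xs G = nths xs {x\<in>G. x < p} @ [xs ! p] @ nths xs {x\<in>G. p < x}"
proof -
  have "G = {x\<in>G. x < p} \<union> ({p} \<union> {x\<in>G. p < x})" using assms by auto
  then have "nths xs G = nths xs ({x\<in>G. x < p} \<union> ({p} \<union> {x\<in>G. p < x}))" by simp
  also have "\<dots> = nths xs {x\<in>G. x < p} @ nths xs ({p} \<union> {x\<in>G. p < x})"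
    by (rule nths_union) auto
  also have "nths xs ({p} \<union> {x\<in>G. p < x}) = nths xs {p} @ nths xs {x\<in>G. p < x}"
    by (rule nths_union) auto
  also have "nths xs {p} = [xs ! p]" using assms by (intro nths_single) auto
  finally show ?thesis .
qed

lemma nths_Max:
  assumes "finite S" "S \<noteq> {}" "S \<subseteq> {..<length xs}"
  shows "nths xs S = nths xs (S - {Max S}) @ [xs ! Max S]"
proof -
  have m: "Max S \<in> S" using assms by simp
  have "nths xs S = nths xs {x\<in>S. x < Max S} @ [xs ! Max S] @ nths xs {x\<in>S. Max S < x}"
    by (rule nths_split3[OF m assms(3)])
  moreover have "{x\<in>S. Max S < x} = {}" using assms by auto
  moreover have "{x\<in>S. x < Max S} = S - {Max S}" using assms by (auto simp: order.not_eq_order_implies_strict)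
  ultimately show ?thesis by simp
qed

lemma sum_nths_split:
  assumes G: "G \<subseteq> {..<length xs}"
  shows "(\<Sum>q<length (nths xs G). h (take q (nths xs G)) (nths xs G ! q) (drop (Suc q) (nths xs G)))
       = (\<Sum>p\<in>G. h (nths xs {x\<in>G. x < p}) (xs ! p) (nths xs {x\<in>G. p < x}))"
proof -
  have fin: "finite G" using G finite_subset by blast
  define rk where "rk p = card {x\<in>G. x < p}" for p
  have len: "length (nths xs G) = card G" using G by (rule nths_length)
  have inj: "inj_on rk G"
  proof (rule inj_onI)
    fix p q assume pq: "p \<in> G" "q \<in> G" "rk p = rk q"
    show "p = q"
    proof (rule ccontr)
      assume "p \<noteq> q"
      then consider "p < q" | "q < p" by linarith
      then show False
      proof cases
        case 1
        then have "{x\<in>G. x < p} \<subset> {x\<in>G. x < q}" using pq by auto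
        then have "rk p < rk q" unfolding rk_def by (rule psubset_card_mono[rotated]) (use fin in auto)
        then show False using pq by simp
      next
        case 2
        then have "{x\<in>G. x < q} \<subset> {x\<in>G. x < p}" using pq by auto
        then have "rk q < rk p" unfolding rk_def by (rule psubset_card_mono[rotated]) (use fin in auto)
        then show False using pq by simp
      qed
    qed
  qed
  have img: "rk ` G = {..<card G}"
  proof (rule card_subset_eq)
    show "finite {..<card G}" by simp
    show "rk ` G \<subseteq> {..<card G}"
    proof
      fix y assume "y \<in> rk ` G"
      then obtain p where p: "p \<in> G" "y = rk p" by auto
      have "{x\<in>G. x < p} \<subset> G" using p by auto
      then have "rk p < card G" unfolding rk_def by (rule psubset_card_mono[OF fin])
      then show "y \<in> {..<card G}" using p by simp
    qed
    show "card (rk ` G) = card {..<card G}" using card_image[OF inj] by simp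
  qed
  have "(\<Sum>q<length (nths xs G). h (take q (nths xs G)) (nths xs G ! q) (drop (Suc q) (nths xs G)))
     = (\<Sum>q\<in>rk ` G. h (take q (nths xs G)) (nths xs G ! q) (drop (Suc q) (nths xs G)))"
    unfolding len img ..
  also have "\<dots> = (\<Sum>p\<in>G. h (take (rk p) (nths xs G)) (nths xs G ! rk p) (drop (Suc (rk p)) (nths xs G)))"
    by (rule sum.reindex[OF inj, unfolded comp_def])
  also have "\<dots> = (\<Sum>p\<in>G. h (nths xs {x\<in>G. x < p}) (xs ! p) (nths xs {x\<in>G. p < x}))"
  proof (rule sum.cong[OF refl])
    fix p assume p: "p \<in> G"
    have e: "nths xs G = nths xs {x\<in>G. x < p} @ [xs ! p] @ nths xs {x\<in>G. p < x}"
      by (rule nths_split3[OF p G])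
    have l: "length (nths xs {x\<in>G. x < p}) = rk p"
      unfolding rk_def by (rule nths_length) (use G in auto)
    show "h (take (rk p) (nths xs G)) (nths xs G ! rk p) (drop (Suc (rk p)) (nths xs G))
        = h (nths xs {x\<in>G. x < p}) (xs ! p) (nths xs {x\<in>G. p < x})"
      unfolding e l[symmetric] by simp
  qed
  finally show ?thesis .
qed

locale fkw = fk smul star \<phi> \<gamma> \<Lambda>
  for smul :: "complex \<Rightarrow> 'b::ring_1 \<Rightarrow> 'b" and star \<phi> \<gamma> \<Lambda> +
  fixes ws :: "'b list"
begin

definition M :: "nat set \<Rightarrow> complex" where "M S = F (nths ws S) []"
definition OpS :: "nat set \<Rightarrow> 'b \<Rightarrow> 'b" where "OpS X = Rprime \<Lambda> G (nths ws X)"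
definition RS :: "nat set \<Rightarrow> 'b \<Rightarrow> 'b" where "RS X = Rprime \<Lambda> \<gamma> (nths ws X)"

lemma M_empty[simp]: "M {} = 1"
  by (simp add: M_def F_Nil)

lemma M_rec:
  assumes S: "S \<noteq> {}" "S \<subseteq> {..<length ws}" and n: "n = Max S"
  shows "M S = (\<Sum>p\<in>S - {n}. \<phi> (ws ! p * OpS {x\<in>S. p < x \<and> x < n} (ws ! n)) * M {x\<in>S. x < p})"
proof -
  have fin: "finite S" using S finite_subset by blast
  have nS: "n \<in> S" using fin S n by simp
  define r where "r = nths ws (S - {n})"
  have "M S = F (r @ [ws ! n]) []"
    unfolding M_def r_def n by (subst nths_Max[OF fin S]) simp
  also have "\<dots> = F r [ws ! n]" by (rule F_snoc_Nil)
  also have "\<dots> = (\<Sum>q<length r. \<phi> (r ! q * Rprime \<Lambda> G (drop (Suc q) r) (ws ! n)) * F (take q r) [])"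
    by (simp add: F_decomp Aterm_def)
  also have "\<dots> = (\<Sum>p\<in>S - {n}. \<phi> (ws ! p * Rprime \<Lambda> G (nths ws {x\<in>S - {n}. p < x}) (ws ! n))
                       * F (nths ws {x\<in>S - {n}. x < p}) [])"
    unfolding r_def
    by (rule sum_nths_split[where h="\<lambda>A x B. \<phi> (x * Rprime \<Lambda> G B (ws ! n)) * F A []"]) (use S in auto)
  also have "\<dots> = (\<Sum>p\<in>S - {n}. \<phi> (ws ! p * OpS {x\<in>S. p < x \<and> x < n} (ws ! n)) * M {x\<in>S. x < p})"
  proof (rule sum.cong[OF refl])
    fix p assume p: "p \<in> S - {n}"
    then have pn: "p < n" using fin n by (simp add: order.not_eq_order_implies_strict)
    have "{x\<in>S - {n}. p < x} = {x\<in>S. p < x \<and> x < n}"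
      using fin n by (auto simp: order.not_eq_order_implies_strict)
    moreover have "{x\<in>S - {n}. x < p} = {x\<in>S. x < p}" using pn by auto
    ultimately show "\<phi> (ws ! p * Rprime \<Lambda> G (nths ws {x\<in>S - {n}. p < x}) (ws ! n)) * F (nths ws {x\<in>S - {n}. x < p}) []
        = \<phi> (ws ! p * OpS {x\<in>S. p < x \<and> x < n} (ws ! n)) * M {x\<in>S. x < p}"
      by (simp add: OpS_def M_def)
  qed
  finally show ?thesis .
qed

lemma Rp_set_rec:
  assumes S: "S \<noteq> {}" "S \<subseteq> {..<length ws}" and n: "n = Max S"
  shows "Rprime \<Lambda> g (nths ws S) v = Rprime \<Lambda> g (nths ws (S - {n})) (\<Lambda> (ws ! n) v)
     + (\<Sum>p\<in>S - {n}. Rprime \<Lambda> g (nths ws {x\<in>S. x < p})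
          (g (ws ! p * Rprime \<Lambda> g (nths ws {x\<in>S. p < x \<and> x < n}) (ws ! n)) * v))"
proof -
  have fin: "finite S" using S finite_subset by blast
  define r where "r = nths ws (S - {n})"
  have "Rprime \<Lambda> g (nths ws S) v = Rprime \<Lambda> g (r @ [ws ! n]) v"
    unfolding r_def n by (subst nths_Max[OF fin S]) simp
  also have "\<dots> = Rprime \<Lambda> g r (\<Lambda> (ws ! n) v) +
     (\<Sum>q<length r. Rprime \<Lambda> g (take q r) (g (r ! q * Rprime \<Lambda> g (drop (Suc q) r) (ws ! n)) * v))"
    by (rule Rprime_snoc)
  also have "(\<Sum>q<length r. Rprime \<Lambda> g (take q r) (g (r ! q * Rprime \<Lambda> g (drop (Suc q) r) (ws ! n)) * v))
     = (\<Sum>p\<in>S - {n}. Rprime \<Lambda> g (nths ws {x\<in>S - {n}. x < p})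
          (g (ws ! p * Rprime \<Lambda> g (nths ws {x\<in>S - {n}. p < x}) (ws ! n)) * v))"
    unfolding r_def
    by (rule sum_nths_split[where h="\<lambda>A x B. Rprime \<Lambda> g A (g (x * Rprime \<Lambda> g B (ws ! n)) * v)"]) (use S in auto)
  also have "\<dots> = (\<Sum>p\<in>S - {n}. Rprime \<Lambda> g (nths ws {x\<in>S. x < p})
          (g (ws ! p * Rprime \<Lambda> g (nths ws {x\<in>S. p < x \<and> x < n}) (ws ! n)) * v))"
  proof (rule sum.cong[OF refl])
    fix p assume p: "p \<in> S - {n}"
    then have pn: "p < n" using fin n by (simp add: order.not_eq_order_implies_strict)
    have "{x\<in>S - {n}. p < x} = {x\<in>S. p < x \<and> x < n}"
      using fin n by (auto simp: order.not_eq_order_implies_strict)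
    moreover have "{x\<in>S - {n}. x < p} = {x\<in>S. x < p}" using pn by auto
    ultimately show "Rprime \<Lambda> g (nths ws {x\<in>S - {n}. x < p}) (g (ws ! p * Rprime \<Lambda> g (nths ws {x\<in>S - {n}. p < x}) (ws ! n)) * v)
      = Rprime \<Lambda> g (nths ws {x\<in>S. x < p}) (g (ws ! p * Rprime \<Lambda> g (nths ws {x\<in>S. p < x \<and> x < n}) (ws ! n)) * v)"
      by simp
  qed
  finally show ?thesis unfolding r_def .
qed

end


definition above :: "nat set \<Rightarrow> nat set \<Rightarrow> nat set" where
  "above X T = {y\<in>X. \<forall>t\<in>T. t < y}"
definition gapL :: "nat set \<Rightarrow> nat set \<Rightarrow> nat \<Rightarrow> nat set" where
  "gapL X T x = {y\<in>X. y < x \<and> (\<forall>t\<in>T. t < x \<longrightarrow> t < y)}"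

lemma sum_Pow_max:
  fixes h :: "nat set \<Rightarrow> 'a::comm_monoid_add"
  assumes "finite X"
  shows "(\<Sum>T\<in>Pow X. h T) = h {} + (\<Sum>t\<in>X. \<Sum>T\<in>Pow {y\<in>X. y < t}. h (insert t T))"
  using assms
proof (induct X rule: finite_linorder_max_induct)
  case empty
  then show ?case by simp
next
  case (insert b A)
  have bA: "b \<notin> A" using insert by auto
  have "(\<Sum>T\<in>Pow (insert b A). h T) = (\<Sum>T\<in>Pow A. h T) + (\<Sum>T\<in>insert b ` Pow A. h T)"
    unfolding Pow_insert by (rule sum.union_disjoint) (use insert bA in auto)
  also have "(\<Sum>T\<in>insert b ` Pow A. h T) = (\<Sum>T\<in>Pow A. h (insert b T))"
    by (rule sum.reindex_cong[where l="insert b"]) (use bA in \<open>auto simp: inj_on_def\<close>)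
  also have "(\<Sum>T\<in>Pow A. h T) = h {} + (\<Sum>t\<in>A. \<Sum>T\<in>Pow {y\<in>A. y < t}. h (insert t T))"
    by (rule insert.hyps)
  also have "(\<Sum>t\<in>A. \<Sum>T\<in>Pow {y\<in>A. y < t}. h (insert t T)) =
       (\<Sum>t\<in>A. \<Sum>T\<in>Pow {y\<in>insert b A. y < t}. h (insert t T))"
  proof (rule sum.cong[OF refl])
    fix t assume "t \<in> A"
    then have "{y\<in>A. y < t} = {y\<in>insert b A. y < t}" using insert by auto
    then show "(\<Sum>T\<in>Pow {y\<in>A. y < t}. h (insert t T)) = (\<Sum>T\<in>Pow {y\<in>insert b A. y < t}. h (insert t T))"
      by simp
  qed
  moreover have "{y\<in>insert b A. y < b} = A" using insert by auto
  ultimately show ?case using bA insert(1) by (simp add: add_ac)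
qed

lemma sum_Pow_mem:
  fixes h :: "nat set \<Rightarrow> nat \<Rightarrow> 'a::comm_monoid_add"
  assumes Y: "finite Y"
  shows "(\<Sum>T\<in>Pow Y. \<Sum>p\<in>T. h T p) =
    (\<Sum>p\<in>Y. \<Sum>T1\<in>Pow {y\<in>Y. y < p}. \<Sum>T2\<in>Pow {y\<in>Y. p < y}. h (T1 \<union> insert p T2) p)"
proof -
  have "(\<Sum>T\<in>Pow Y. \<Sum>p\<in>T. h T p) = (\<Sum>T\<in>Pow Y. \<Sum>p\<in>{p. p \<in> Y \<and> p \<in> T}. h T p)"
    by (rule sum.cong[OF refl]) (rule sum.cong, auto)
  also have "\<dots> = (\<Sum>p\<in>Y. \<Sum>T\<in>{T. T \<in> Pow Y \<and> p \<in> T}. h T p)"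
    by (rule sum.swap_restrict) (use Y in auto)
  also have "\<dots> = (\<Sum>p\<in>Y. \<Sum>T1\<in>Pow {y\<in>Y. y < p}. \<Sum>T2\<in>Pow {y\<in>Y. p < y}. h (T1 \<union> insert p T2) p)"
  proof (rule sum.cong[OF refl])
    fix p assume p: "p \<in> Y"
    have "(\<Sum>T\<in>{T. T \<in> Pow Y \<and> p \<in> T}. h T p) =
        (\<Sum>(T1, T2)\<in>Pow {y\<in>Y. y < p} \<times> Pow {y\<in>Y. p < y}. h (T1 \<union> insert p T2) p)"
    proof (rule sum.reindex_bij_witness[where i="\<lambda>(T1, T2). T1 \<union> insert p T2"
          and j="\<lambda>T. ({y\<in>T. y < p}, {y\<in>T. p < y})"])
      fix T assume "T \<in> {T. T \<in> Pow Y \<and> p \<in> T}"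
      then show "(case ({y\<in>T. y < p}, {y\<in>T. p < y}) of (T1, T2) \<Rightarrow> T1 \<union> insert p T2) = T"
        by auto
    next
      fix T assume "T \<in> {T. T \<in> Pow Y \<and> p \<in> T}"
      then show "({y\<in>T. y < p}, {y\<in>T. p < y}) \<in> Pow {y\<in>Y. y < p} \<times> Pow {y\<in>Y. p < y}" by auto
    next
      fix b assume "b \<in> Pow {y\<in>Y. y < p} \<times> Pow {y\<in>Y. p < y}"
      then show "({y\<in>case b of (T1, T2) \<Rightarrow> T1 \<union> insert p T2. y < p},
               {y\<in>case b of (T1, T2) \<Rightarrow> T1 \<union> insert p T2. p < y}) = b"
        by (cases b) auto
    next
      fix b assume "b \<in> Pow {y\<in>Y. y < p} \<times> Pow {y\<in>Y. p < y}"
      then show "(case b of (T1, T2) \<Rightarrow> T1 \<union> insert p T2) \<in> {T. T \<in> Pow Y \<and> p \<in> T}"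
        using p by (cases b) auto
    next
      fix T assume "T \<in> {T. T \<in> Pow Y \<and> p \<in> T}"
      then have "{y\<in>T. y < p} \<union> insert p {y\<in>T. p < y} = T" by auto
      then show "(case ({y\<in>T. y < p}, {y\<in>T. p < y}) of (T1, T2) \<Rightarrow> h (T1 \<union> insert p T2) p) = h T p"
        by simp
    qed
    also have "\<dots> = (\<Sum>T1\<in>Pow {y\<in>Y. y < p}. \<Sum>T2\<in>Pow {y\<in>Y. p < y}. h (T1 \<union> insert p T2) p)"
      by (rule sum.cartesian_product[symmetric])
    finally show "(\<Sum>T\<in>{T. T \<in> Pow Y \<and> p \<in> T}. h T p) =
        (\<Sum>T1\<in>Pow {y\<in>Y. y < p}. \<Sum>T2\<in>Pow {y\<in>Y. p < y}. h (T1 \<union> insert p T2) p)" .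
  qed
  finally show ?thesis .
qed

context fkw
begin

definition cw :: "nat set \<Rightarrow> nat set \<Rightarrow> complex" where
  "cw X T = M (above X T) * (\<Prod>x\<in>T. M (gapL X T x))"

definition Gh :: "nat set \<Rightarrow> 'b \<Rightarrow> 'b" where
  "Gh X v = (\<Sum>T\<in>Pow X. smul (cw X T) (RS T v))"

lemma cw_empty: "cw X {} = M X"
  by (simp add: cw_def above_def)

lemma cw_ins_max:
  assumes "t \<in> X" "\<forall>x\<in>T'. x < t" "finite T'"
  shows "cw X (insert t T') = M {y\<in>X. t < y} * cw {y\<in>X. y < t} T'"
proof -
  have tT: "t \<notin> T'" using assms by auto
  have a: "above X (insert t T') = {y\<in>X. t < y}"
    using assms by (auto simp: above_def)
  have g: "gapL X (insert t T') t = above {y\<in>X. y < t} T'"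
    using assms by (auto simp: above_def gapL_def)
  have p: "(\<Prod>x\<in>T'. M (gapL X (insert t T') x)) = (\<Prod>x\<in>T'. M (gapL {y\<in>X. y < t} T' x))"
  proof (rule prod.cong[OF refl])
    fix x assume "x \<in> T'"
    then have "gapL X (insert t T') x = gapL {y\<in>X. y < t} T' x"
      using assms by (auto simp: gapL_def)
    then show "M (gapL X (insert t T') x) = M (gapL {y\<in>X. y < t} T' x)" by simp
  qed
  show ?thesis unfolding cw_def a using assms(3) tT by (simp add: g p)
qed

lemma cw_split:
  assumes p: "p \<in> Y" and T1: "T1 \<subseteq> {y\<in>Y. y < p}" and T2: "T2 \<subseteq> {y\<in>Y. p < y}" and fY: "finite Y"
  shows "cw Y (T1 \<union> insert p T2) = cw {y\<in>Y. y < p} T1 * cw {y\<in>Y. p < y} T2"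
proof -
  have H1: "\<And>x. x \<in> T1 \<Longrightarrow> x \<in> Y \<and> x < p" using T1 by blast
  have H2: "\<And>x. x \<in> T2 \<Longrightarrow> x \<in> Y \<and> p < x" using T2 by blast
  have f1: "finite T1" by (rule finite_subset[OF T1]) (simp add: fY)
  have f2: "finite T2" by (rule finite_subset[OF T2]) (simp add: fY)
  have a: "above Y (T1 \<union> insert p T2) = above {y\<in>Y. p < y} T2"
    unfolding above_def using H1 by (auto intro: less_trans)
  have gp': "gapL Y (T1 \<union> insert p T2) p = above {y\<in>Y. y < p} T1"
    unfolding above_def gapL_def using H1 H2 by (auto dest: less_asym)
  have p1: "(\<Prod>x\<in>T1. M (gapL Y (T1 \<union> insert p T2) x)) = (\<Prod>x\<in>T1. M (gapL {y\<in>Y. y < p} T1 x))"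
  proof (rule prod.cong[OF refl])
    fix x assume x: "x \<in> T1"
    have "gapL Y (T1 \<union> insert p T2) x = gapL {y\<in>Y. y < p} T1 x"
      unfolding gapL_def using H1[OF x] H2 by (auto dest: less_trans less_asym)
    then show "M (gapL Y (T1 \<union> insert p T2) x) = M (gapL {y\<in>Y. y < p} T1 x)" by simp
  qed
  have p2: "(\<Prod>x\<in>T2. M (gapL Y (T1 \<union> insert p T2) x)) = (\<Prod>x\<in>T2. M (gapL {y\<in>Y. p < y} T2 x))"
  proof (rule prod.cong[OF refl])
    fix x assume x: "x \<in> T2"
    have "gapL Y (T1 \<union> insert p T2) x = gapL {y\<in>Y. p < y} T2 x"
    proof
      show "gapL Y (T1 \<union> insert p T2) x \<subseteq> gapL {y\<in>Y. p < y} T2 x"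
        unfolding gapL_def using H2[OF x] by auto
      show "gapL {y\<in>Y. p < y} T2 x \<subseteq> gapL Y (T1 \<union> insert p T2) x"
        unfolding gapL_def using H1 H2[OF x] by (auto intro: less_trans)
    qed
    then show "M (gapL Y (T1 \<union> insert p T2) x) = M (gapL {y\<in>Y. p < y} T2 x)" by simp
  qed
  have d: "T1 \<inter> insert p T2 = {}" "p \<notin> T2" using H1 H2 by (auto dest: less_asym)
  have pe: "(\<Prod>x\<in>T1 \<union> insert p T2. M (gapL Y (T1 \<union> insert p T2) x)) =
      (\<Prod>x\<in>T1. M (gapL Y (T1 \<union> insert p T2) x)) * (M (gapL Y (T1 \<union> insert p T2) p) *
      (\<Prod>x\<in>T2. M (gapL Y (T1 \<union> insert p T2) x)))"
    using f1 f2 d by (simp add: prod.union_disjoint)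
  show ?thesis unfolding cw_def a pe gp' p1 p2 by (simp only: mult_ac)
qed

lemma RS_empty[simp]: "RS {} v = v"
  by (simp add: RS_def)

lemma RS_ins_max:
  assumes "T' \<subseteq> {..<length ws}" "\<forall>x\<in>T'. x < t" "t < length ws"
  shows "RS (insert t T') v = RS T' (\<Lambda> (ws ! t) v) +
     (\<Sum>p\<in>T'. RS {x\<in>T'. x < p} (\<gamma> (ws ! p * RS {x\<in>T'. p < x} (ws ! t)) * v))"
proof -
  have fin: "finite T'" using assms finite_subset by blast
  have mx: "t = Max (insert t T')" using assms fin by (intro Max_eqI[symmetric]) auto
  have S: "insert t T' \<noteq> {}" "insert t T' \<subseteq> {..<length ws}" using assms by auto
  have tT: "insert t T' - {t} = T'" using assms by auto
  show ?thesis unfolding RS_def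
    apply (subst Rp_set_rec[OF S mx])
    unfolding tT
  proof (rule arg_cong2[where f="(+)"], simp, rule sum.cong[OF refl])
    fix p assume p: "p \<in> T'"
    have "{x\<in>insert t T'. x < p} = {x\<in>T'. x < p}" using p assms by auto
    moreover have "{x\<in>insert t T'. p < x \<and> x < t} = {x\<in>T'. p < x}" using p assms by auto
    ultimately show "Rprime \<Lambda> \<gamma> (nths ws {x\<in>insert t T'. x < p})
        (\<gamma> (ws ! p * Rprime \<Lambda> \<gamma> (nths ws {x\<in>insert t T'. p < x \<and> x < t}) (ws ! t)) * v) =
       Rprime \<Lambda> \<gamma> (nths ws {x\<in>T'. x < p}) (\<gamma> (ws ! p * Rprime \<Lambda> \<gamma> (nths ws {x\<in>T'. p < x}) (ws ! t)) * v)"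
      by simp
  qed
qed

lemma RS_add: "RS T (a + b) = RS T a + RS T b" by (simp add: RS_def Rp_add)
lemma RS_smul: "RS T (smul c a) = smul c (RS T a)" by (simp add: RS_def Rp_smul)
lemma RS_sum: "RS T (sum f A) = (\<Sum>i\<in>A. RS T (f i))" by (simp add: RS_def Rp_sum)

lemma Gh_add: "Gh X (a + b) = Gh X a + Gh X b"
  by (simp add: Gh_def RS_add smul_add sum.distrib)
lemma Gh_smul: "Gh X (smul c a) = smul c (Gh X a)"
  by (simp add: Gh_def RS_smul smul_smul smul_sum mult.commute)
lemma Gh_zero[simp]: "Gh X 0 = 0"
  using Gh_add[of X 0 0] by simp
lemma Gh_sum: "Gh X (sum f A) = (\<Sum>i\<in>A. Gh X (f i))"
  by (induct A rule: infinite_finite_induct) (auto simp: Gh_add)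

lemma lin_chain: "RS T1 (\<gamma> (a * (\<Sum>i\<in>A. smul (c i) (x i))) * v) = (\<Sum>i\<in>A. smul (c i) (RS T1 (\<gamma> (a * x i) * v)))"
  by (simp add: sum_distrib_left smul_mult_right gam_sum gam_smul sum_distrib_right smul_mult_left RS_sum RS_smul)

lemma Gh_char:
  assumes X: "X \<subseteq> {..<length ws}"
  shows "Gh X v = smul (M X) v + (\<Sum>t\<in>X. smul (M {y\<in>X. t < y})
     (Gh {y\<in>X. y < t} (\<Lambda> (ws ! t) v) +
      (\<Sum>p\<in>{y\<in>X. y < t}. Gh {y\<in>X. y < p} (\<gamma> (ws ! p * Gh {y\<in>X. p < y \<and> y < t} (ws ! t)) * v))))"
proof -
  have fin: "finite X" using X finite_subset by blast
  have "Gh X v = smul (cw X {}) (RS {} v) +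
      (\<Sum>t\<in>X. \<Sum>T\<in>Pow {y\<in>X. y < t}. smul (cw X (insert t T)) (RS (insert t T) v))"
    unfolding Gh_def by (rule sum_Pow_max[OF fin])
  also have "(\<Sum>t\<in>X. \<Sum>T\<in>Pow {y\<in>X. y < t}. smul (cw X (insert t T)) (RS (insert t T) v))
    = (\<Sum>t\<in>X. smul (M {y\<in>X. t < y})
     (Gh {y\<in>X. y < t} (\<Lambda> (ws ! t) v) +
      (\<Sum>p\<in>{y\<in>X. y < t}. Gh {y\<in>X. y < p} (\<gamma> (ws ! p * Gh {y\<in>X. p < y \<and> y < t} (ws ! t)) * v))))"
  proof (rule sum.cong[OF refl])
    fix t assume t: "t \<in> X"
    define Y where "Y = {y\<in>X. y < t}"
    have finY: "finite Y" using fin by (simp add: Y_def)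
    have YX: "Y \<subseteq> {..<length ws}" using X by (auto simp: Y_def)
    have tl: "t < length ws" using X t by auto
    have "(\<Sum>T\<in>Pow Y. smul (cw X (insert t T)) (RS (insert t T) v)) =
        (\<Sum>T\<in>Pow Y. smul (M {y\<in>X. t < y}) (smul (cw Y T) (RS T (\<Lambda> (ws ! t) v)) +
           (\<Sum>p\<in>T. smul (cw Y T) (RS {x\<in>T. x < p} (\<gamma> (ws ! p * RS {x\<in>T. p < x} (ws ! t)) * v)))))"
    proof (rule sum.cong[OF refl])
      fix T assume T: "T \<in> Pow Y"
      have fT: "finite T" using T finY finite_subset by blast
      have c: "cw X (insert t T) = M {y\<in>X. t < y} * cw Y T"
        unfolding Y_def by (rule cw_ins_max) (use t T fT in \<open>auto simp: Y_def\<close>)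
      have r: "RS (insert t T) v = RS T (\<Lambda> (ws ! t) v) +
         (\<Sum>p\<in>T. RS {x\<in>T. x < p} (\<gamma> (ws ! p * RS {x\<in>T. p < x} (ws ! t)) * v))"
        by (rule RS_ins_max) (use T YX tl in \<open>auto simp: Y_def\<close>)
      show "smul (cw X (insert t T)) (RS (insert t T) v) =
         smul (M {y\<in>X. t < y}) (smul (cw Y T) (RS T (\<Lambda> (ws ! t) v)) +
           (\<Sum>p\<in>T. smul (cw Y T) (RS {x\<in>T. x < p} (\<gamma> (ws ! p * RS {x\<in>T. p < x} (ws ! t)) * v))))"
        unfolding c r by (simp add: smul_smul smul_add smul_sum)
    qed
    also have "\<dots> = smul (M {y\<in>X. t < y}) (Gh Y (\<Lambda> (ws ! t) v) +
        (\<Sum>T\<in>Pow Y. \<Sum>p\<in>T. smul (cw Y T) (RS {x\<in>T. x < p} (\<gamma> (ws ! p * RS {x\<in>T. p < x} (ws ! t)) * v))))"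
      by (simp add: smul_sum[symmetric] sum.distrib Gh_def)
    also have "(\<Sum>T\<in>Pow Y. \<Sum>p\<in>T. smul (cw Y T) (RS {x\<in>T. x < p} (\<gamma> (ws ! p * RS {x\<in>T. p < x} (ws ! t)) * v)))
      = (\<Sum>p\<in>Y. \<Sum>T1\<in>Pow {y\<in>Y. y < p}. \<Sum>T2\<in>Pow {y\<in>Y. p < y}.
           smul (cw Y (T1 \<union> insert p T2)) (RS {x\<in>T1 \<union> insert p T2. x < p}
             (\<gamma> (ws ! p * RS {x\<in>T1 \<union> insert p T2. p < x} (ws ! t)) * v)))"
      by (rule sum_Pow_mem[OF finY])
    also have "\<dots> = (\<Sum>p\<in>Y. Gh {y\<in>X. y < p} (\<gamma> (ws ! p * Gh {y\<in>X. p < y \<and> y < t} (ws ! t)) * v))"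
    proof (rule sum.cong[OF refl])
      fix p assume p: "p \<in> Y"
      have e1: "{y\<in>Y. y < p} = {y\<in>X. y < p}" using p by (auto simp: Y_def)
      have e2: "{y\<in>Y. p < y} = {y\<in>X. p < y \<and> y < t}" by (auto simp: Y_def)
      have "(\<Sum>T1\<in>Pow {y\<in>Y. y < p}. \<Sum>T2\<in>Pow {y\<in>Y. p < y}.
           smul (cw Y (T1 \<union> insert p T2)) (RS {x\<in>T1 \<union> insert p T2. x < p}
             (\<gamma> (ws ! p * RS {x\<in>T1 \<union> insert p T2. p < x} (ws ! t)) * v)))
        = (\<Sum>T1\<in>Pow {y\<in>Y. y < p}. \<Sum>T2\<in>Pow {y\<in>Y. p < y}.
           smul (cw {y\<in>Y. y < p} T1) (smul (cw {y\<in>Y. p < y} T2) (RS T1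
             (\<gamma> (ws ! p * RS T2 (ws ! t)) * v))))"
      proof (intro sum.cong refl)
        fix T1 T2 assume T1: "T1 \<in> Pow {y\<in>Y. y < p}" and T2: "T2 \<in> Pow {y\<in>Y. p < y}"
        have s1: "{x\<in>T1 \<union> insert p T2. x < p} = T1" using T1 T2 by auto
        have s2: "{x\<in>T1 \<union> insert p T2. p < x} = T2" using T1 T2 by auto
        have c: "cw Y (T1 \<union> insert p T2) = cw {y\<in>Y. y < p} T1 * cw {y\<in>Y. p < y} T2"
          by (rule cw_split) (use p T1 T2 finY in auto)
        show "smul (cw Y (T1 \<union> insert p T2)) (RS {x\<in>T1 \<union> insert p T2. x < p}
             (\<gamma> (ws ! p * RS {x\<in>T1 \<union> insert p T2. p < x} (ws ! t)) * v))
           = smul (cw {y\<in>Y. y < p} T1) (smul (cw {y\<in>Y. p < y} T2) (RS T1 (\<gamma> (ws ! p * RS T2 (ws ! t)) * v)))"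
          unfolding s1 s2 c by (simp add: smul_smul)
      qed
      also have "\<dots> = Gh {y\<in>Y. y < p} (\<gamma> (ws ! p * Gh {y\<in>Y. p < y} (ws ! t)) * v)"
        by (simp add: Gh_def lin_chain smul_sum)
      finally show "(\<Sum>T1\<in>Pow {y\<in>Y. y < p}. \<Sum>T2\<in>Pow {y\<in>Y. p < y}.
           smul (cw Y (T1 \<union> insert p T2)) (RS {x\<in>T1 \<union> insert p T2. x < p}
             (\<gamma> (ws ! p * RS {x\<in>T1 \<union> insert p T2. p < x} (ws ! t)) * v)))
        = Gh {y\<in>X. y < p} (\<gamma> (ws ! p * Gh {y\<in>X. p < y \<and> y < t} (ws ! t)) * v)"
        unfolding e1 e2 .
    qed
    finally show "(\<Sum>T\<in>Pow {y\<in>X. y < t}. smul (cw X (insert t T)) (RS (insert t T) v))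
      = smul (M {y\<in>X. t < y})
     (Gh {y\<in>X. y < t} (\<Lambda> (ws ! t) v) +
      (\<Sum>p\<in>{y\<in>X. y < t}. Gh {y\<in>X. y < p} (\<gamma> (ws ! p * Gh {y\<in>X. p < y \<and> y < t} (ws ! t)) * v)))"
      unfolding Y_def .
  qed
  finally show ?thesis by (simp add: cw_empty)
qed

end


context fkw
begin

theorem OpS_Gh:
  assumes "X \<subseteq> {..<length ws}"
  shows "OpS X v = Gh X v"
  using assms
proof (induct "card X" arbitrary: X v rule: less_induct)
  case less
  have X: "X \<subseteq> {..<length ws}" by (rule less.prems)
  have fin: "finite X" using X finite_subset by blast
  have IH: "OpS Z y = Gh Z y" if "Z \<subset> X" for Z y
  proof -
    have "card Z < card X" using that fin by (rule psubset_card_mono[rotated])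
    moreover have "Z \<subseteq> {..<length ws}" using that X by auto
    ultimately show ?thesis using less.hyps by blast
  qed
  show ?case
  proof (cases "X = {}")
    case True
    then show ?thesis by (simp add: OpS_def Gh_def cw_def above_def)
  next
    case False
    define n where "n = Max X"
    have nX: "n \<in> X" using False fin by (simp add: n_def)
    have nmax: "\<And>x. x \<in> X \<Longrightarrow> x \<le> n" using fin by (simp add: n_def)
    define Xn where "Xn = X - {n}"
    have ltn: "\<And>p. p \<in> Xn \<Longrightarrow> p < n" using nmax by (force simp: Xn_def)
    define fp where "fp p = \<phi> (ws ! p * Gh {y\<in>X. p < y \<and> y < n} (ws ! n))" for p
    define st where "st t = Gh {y\<in>X. y < t} (\<Lambda> (ws ! t) v) +
      (\<Sum>p\<in>{y\<in>X. y < t}. Gh {y\<in>X. y < p} (\<gamma> (ws ! p * Gh {y\<in>X. p < y \<and> y < t} (ws ! t)) * v))" for t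
    have sub1: "Xn \<subset> X" unfolding Xn_def using nX by blast
    have sub2: "{y\<in>X. y < p} \<subset> X" if "p \<in> Xn" for p
    proof -
      have "n \<notin> {y\<in>X. y < p}" using ltn[OF that] by simp
      then show ?thesis using nX by blast
    qed
    have sub3: "{y\<in>X. p < y \<and> y < n} \<subset> X" for p
    proof -
      have "n \<notin> {y\<in>X. p < y \<and> y < n}" by simp
      then show ?thesis using nX by blast
    qed
    have "OpS X v = OpS Xn (\<Lambda> (ws ! n) v) +
       (\<Sum>p\<in>Xn. OpS {y\<in>X. y < p} (G (ws ! p * OpS {y\<in>X. p < y \<and> y < n} (ws ! n)) * v))"
      unfolding OpS_def Xn_def by (rule Rp_set_rec[OF False X n_def])
    also have "\<dots> = Gh Xn (\<Lambda> (ws ! n) v) +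
       (\<Sum>p\<in>Xn. Gh {y\<in>X. y < p} (G (ws ! p * Gh {y\<in>X. p < y \<and> y < n} (ws ! n)) * v))"
    proof -
      have e: "OpS {y\<in>X. y < p} (G (ws ! p * OpS {y\<in>X. p < y \<and> y < n} (ws ! n)) * v) =
          Gh {y\<in>X. y < p} (G (ws ! p * Gh {y\<in>X. p < y \<and> y < n} (ws ! n)) * v)" if "p \<in> Xn" for p
        by (simp add: IH[OF sub2[OF that]] IH[OF sub3])
      show ?thesis by (simp add: IH[OF sub1] e)
    qed
    also have "\<dots> = Gh Xn (\<Lambda> (ws ! n) v) +
       (\<Sum>p\<in>Xn. Gh {y\<in>X. y < p} (\<gamma> (ws ! p * Gh {y\<in>X. p < y \<and> y < n} (ws ! n)) * v)) +
       (\<Sum>p\<in>Xn. smul (fp p) (Gh {y\<in>X. y < p} v))"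
      by (simp add: gp_mult Gh_add Gh_smul sum.distrib fp_def add.assoc)
    also have "(\<Sum>p\<in>Xn. smul (fp p) (Gh {y\<in>X. y < p} v)) = smul (M X) v + (\<Sum>t\<in>Xn. smul (M {y\<in>X. t < y}) (st t))"
    proof -
      have "(\<Sum>p\<in>Xn. smul (fp p) (Gh {y\<in>X. y < p} v)) =
         (\<Sum>p\<in>Xn. smul (fp p * M {y\<in>X. y < p}) v + (\<Sum>t\<in>{t\<in>Xn. t < p}. smul (fp p * M {y\<in>X. t < y \<and> y < p}) (st t)))"
      proof (rule sum.cong[OF refl])
        fix p assume p: "p \<in> Xn"
        have Xp: "{y\<in>X. y < p} \<subseteq> {..<length ws}" using X by auto
        have e0: "{t\<in>Xn. t < p} = {y\<in>X. y < p}" using p ltn[OF p] by (auto simp: Xn_def)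
        have "Gh {y\<in>X. y < p} v = smul (M {y\<in>X. y < p}) v + (\<Sum>t\<in>{y\<in>X. y < p}. smul (M {y\<in>X. t < y \<and> y < p}) (st t))"
        proof -
          have "Gh {y\<in>X. y < p} v = smul (M {y\<in>X. y < p}) v + (\<Sum>t\<in>{y\<in>X. y < p}. smul (M {y\<in>{y\<in>X. y < p}. t < y})
             (Gh {y\<in>{y\<in>X. y < p}. y < t} (\<Lambda> (ws ! t) v) +
              (\<Sum>p'\<in>{y\<in>{y\<in>X. y < p}. y < t}. Gh {y\<in>{y\<in>X. y < p}. y < p'} (\<gamma> (ws ! p' * Gh {y\<in>{y\<in>X. y < p}. p' < y \<and> y < t} (ws ! t)) * v))))"
            by (rule Gh_char[OF Xp])
          also have "\<dots> = smul (M {y\<in>X. y < p}) v + (\<Sum>t\<in>{y\<in>X. y < p}. smul (M {y\<in>X. t < y \<and> y < p}) (st t))"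
          proof (intro arg_cong2[where f="(+)"] refl sum.cong)
            fix t assume t: "t \<in> {y\<in>X. y < p}"
            have e1: "{y\<in>{y\<in>X. y < p}. t < y} = {y\<in>X. t < y \<and> y < p}" by auto
            have e2: "{y\<in>{y\<in>X. y < p}. y < t} = {y\<in>X. y < t}" using t by auto
            have e3: "{y\<in>{y\<in>X. y < p}. y < p'} = {y\<in>X. y < p'}" if "p' \<in> {y\<in>X. y < t}" for p'
              using t that by auto
            have e5: "(\<Sum>p'\<in>{y\<in>X. y < t}. Gh {y\<in>{y\<in>X. y < p}. y < p'} (\<gamma> (ws ! p' * Gh {y\<in>X. p' < y \<and> y < t} (ws ! t)) * v))
               = (\<Sum>p'\<in>{y\<in>X. y < t}. Gh {y\<in>X. y < p'} (\<gamma> (ws ! p' * Gh {y\<in>X. p' < y \<and> y < t} (ws ! t)) * v))"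
              by (rule sum.cong[OF refl]) (simp only: e3)
            have e4: "{y\<in>{y\<in>X. y < p}. p' < y \<and> y < t} = {y\<in>X. p' < y \<and> y < t}" for p'
              using t by auto
            show "smul (M {y\<in>{y\<in>X. y < p}. t < y})
             (Gh {y\<in>{y\<in>X. y < p}. y < t} (\<Lambda> (ws ! t) v) +
              (\<Sum>p'\<in>{y\<in>{y\<in>X. y < p}. y < t}. Gh {y\<in>{y\<in>X. y < p}. y < p'} (\<gamma> (ws ! p' * Gh {y\<in>{y\<in>X. y < p}. p' < y \<and> y < t} (ws ! t)) * v)))
              = smul (M {y\<in>X. t < y \<and> y < p}) (st t)"
              unfolding e1 e2 e4 st_def e5 ..
          qed
          finally show ?thesis .
        qed
        then show "smul (fp p) (Gh {y\<in>X. y < p} v) =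
           smul (fp p * M {y\<in>X. y < p}) v + (\<Sum>t\<in>{t\<in>Xn. t < p}. smul (fp p * M {y\<in>X. t < y \<and> y < p}) (st t))"
          unfolding e0 by (simp add: smul_add smul_sum smul_smul)
      qed
      also have "\<dots> = smul (\<Sum>p\<in>Xn. fp p * M {y\<in>X. y < p}) v +
          (\<Sum>p\<in>Xn. \<Sum>t\<in>{t\<in>Xn. t < p}. smul (fp p * M {y\<in>X. t < y \<and> y < p}) (st t))"
        by (simp add: sum.distrib smul_sum_left)
      also have "(\<Sum>p\<in>Xn. \<Sum>t\<in>{t\<in>Xn. t < p}. smul (fp p * M {y\<in>X. t < y \<and> y < p}) (st t))
          = (\<Sum>t\<in>Xn. \<Sum>p\<in>{p\<in>Xn. t < p}. smul (fp p * M {y\<in>X. t < y \<and> y < p}) (st t))"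
        using sum.swap_restrict[of Xn Xn "\<lambda>p t. smul (fp p * M {y\<in>X. t < y \<and> y < p}) (st t)" "\<lambda>p t. t < p"] fin
        by (simp add: Xn_def)
      also have "\<dots> = (\<Sum>t\<in>Xn. smul (M {y\<in>X. t < y}) (st t))"
      proof (rule sum.cong[OF refl])
        fix t assume t: "t \<in> Xn"
        have ne: "{y\<in>X. t < y} \<noteq> {}" using nX ltn[OF t] by auto
        have sb: "{y\<in>X. t < y} \<subseteq> {..<length ws}" using X by auto
        have mx: "n = Max {y\<in>X. t < y}"
          using nX ltn[OF t] nmax fin by (intro Max_eqI[symmetric]) auto
        have "M {y\<in>X. t < y} = (\<Sum>p\<in>{y\<in>X. t < y} - {n}. \<phi> (ws ! p * OpS {x\<in>{y\<in>X. t < y}. p < x \<and> x < n} (ws ! n)) * M {x\<in>{y\<in>X. t < y}. x < p})"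
          by (rule M_rec[OF ne sb mx])
        also have "\<dots> = (\<Sum>p\<in>{p\<in>Xn. t < p}. fp p * M {y\<in>X. t < y \<and> y < p})"
        proof (rule sum.cong)
          show "{y\<in>X. t < y} - {n} = {p\<in>Xn. t < p}" by (auto simp: Xn_def)
        next
          fix p assume p: "p \<in> {p\<in>Xn. t < p}"
          have a1: "{x\<in>{y\<in>X. t < y}. p < x \<and> x < n} = {y\<in>X. p < y \<and> y < n}" using p by auto
          have a2: "{x\<in>{y\<in>X. t < y}. x < p} = {y\<in>X. t < y \<and> y < p}" by auto
          show "\<phi> (ws ! p * OpS {x\<in>{y\<in>X. t < y}. p < x \<and> x < n} (ws ! n)) * M {x\<in>{y\<in>X. t < y}. x < p}
              = fp p * M {y\<in>X. t < y \<and> y < p}"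
            unfolding a1 a2 fp_def IH[OF sub3] ..
        qed
        finally show "(\<Sum>p\<in>{p\<in>Xn. t < p}. smul (fp p * M {y\<in>X. t < y \<and> y < p}) (st t)) = smul (M {y\<in>X. t < y}) (st t)"
          by (simp add: smul_sum_left)
      qed
      also have "(\<Sum>p\<in>Xn. fp p * M {y\<in>X. y < p}) = M X"
      proof -
        have "M X = (\<Sum>p\<in>X - {n}. \<phi> (ws ! p * OpS {x\<in>X. p < x \<and> x < n} (ws ! n)) * M {x\<in>X. x < p})"
          by (rule M_rec[OF False X n_def])
        then show ?thesis by (simp add: Xn_def fp_def IH[OF sub3])
      qed
      finally show ?thesis .
    qed
    also have "Gh Xn (\<Lambda> (ws ! n) v) +
       (\<Sum>p\<in>Xn. Gh {y\<in>X. y < p} (\<gamma> (ws ! p * Gh {y\<in>X. p < y \<and> y < n} (ws ! n)) * v)) = st n"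
    proof -
      have "{y\<in>X. y < n} = Xn" using nmax by (force simp: Xn_def)
      then show ?thesis by (simp add: st_def)
    qed
    also have "Gh X v = smul (M X) v + (\<Sum>t\<in>X. smul (M {y\<in>X. t < y}) (st t))"
      unfolding st_def by (rule Gh_char[OF X])
    moreover have "(\<Sum>t\<in>X. smul (M {y\<in>X. t < y}) (st t)) = smul (M {y\<in>X. n < y}) (st n) + (\<Sum>t\<in>Xn. smul (M {y\<in>X. t < y}) (st t))"
      unfolding Xn_def using fin nX by (rule sum.remove)
    moreover have "{y\<in>X. n < y} = {}" using nmax by force
    ultimately show ?thesis by (simp add: add_ac)
  qed
qed

end


definition cr :: "nat set \<Rightarrow> nat set \<Rightarrow> bool" where
  "cr V W \<longleftrightarrow> (\<exists>a b c d. a < b \<and> b < c \<and> c < d \<and> a \<in> V \<and> c \<in> V \<and> b \<in> W \<and> d \<in> W)"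
definition ncr :: "nat set set \<Rightarrow> bool" where
  "ncr P \<longleftrightarrow> (\<forall>V\<in>P. \<forall>W\<in>P. V \<noteq> W \<longrightarrow> \<not> cr V W)"
definition NCs :: "nat set \<Rightarrow> nat set set set" where
  "NCs S = {P. partition_on S P \<and> ncr P}"
definition blk :: "nat set set \<Rightarrow> nat \<Rightarrow> nat set" where
  "blk P x = (THE V. V \<in> P \<and> x \<in> V)"

lemma NC_NCs: "NC n = NCs {0..<n}"
  unfolding NC_def NCs_def ncr_def cr_def by simp

lemma cr_mono: "cr V W \<Longrightarrow> V \<subseteq> V' \<Longrightarrow> W \<subseteq> W' \<Longrightarrow> cr V' W'"
  unfolding cr_def by blast

lemma cr_single1: "\<not> cr {x} W"
  unfolding cr_def by auto
lemma cr_single2: "\<not> cr W {x}"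
  unfolding cr_def by auto

lemma ncr_subset: "ncr P \<Longrightarrow> Q \<subseteq> P \<Longrightarrow> ncr Q"
  unfolding ncr_def by blast

lemma partition_on_iff: "partition_on S P \<longleftrightarrow> \<Union>P = S \<and> (\<forall>V\<in>P. \<forall>W\<in>P. V \<noteq> W \<longrightarrow> V \<inter> W = {}) \<and> {} \<notin> P"
  unfolding partition_on_def disjoint_def by blast

lemma NCs_iff: "P \<in> NCs S \<longleftrightarrow> \<Union>P = S \<and> (\<forall>V\<in>P. \<forall>W\<in>P. V \<noteq> W \<longrightarrow> V \<inter> W = {}) \<and> {} \<notin> P \<and> ncr P"
  unfolding NCs_def partition_on_iff by simp

lemma finite_NCs: "finite S \<Longrightarrow> finite (NCs S)"
proof -
  assume "finite S"
  moreover have "NCs S \<subseteq> Pow (Pow S)" by (auto simp: NCs_iff)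
  ultimately show ?thesis by (meson finite_Pow_iff finite_subset)
qed

lemma NCs_empty: "NCs {} = {{}}"
  by (auto simp: NCs_def partition_on_empty ncr_def)

lemma blk_eq: "(\<forall>V\<in>P. \<forall>W\<in>P. V \<noteq> W \<longrightarrow> V \<inter> W = {}) \<Longrightarrow> V \<in> P \<Longrightarrow> x \<in> V \<Longrightarrow> blk P x = V"
  unfolding blk_def by (rule the_equality) blast+

lemma blk_in: "P \<in> NCs S \<Longrightarrow> x \<in> S \<Longrightarrow> blk P x \<in> P \<and> x \<in> blk P x"
proof -
  assume P: "P \<in> NCs S" and x: "x \<in> S"
  then obtain V where V: "V \<in> P" "x \<in> V" unfolding NCs_iff by blast
  have "blk P x = V" using P V by (intro blk_eq) (auto simp: NCs_iff)
  then show ?thesis using V by simp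
qed

lemma ncr_lift:
  assumes nc: "ncr P" and h: "\<And>V. V \<in> Q \<Longrightarrow> h V \<in> P" "\<And>V. V \<in> Q \<Longrightarrow> V \<subseteq> h V" and inj: "inj_on h Q"
  shows "ncr Q"
  unfolding ncr_def
proof (intro ballI impI notI)
  fix V W assume V: "V \<in> Q" and W: "W \<in> Q" and VW: "V \<noteq> W" and c: "cr V W"
  have "h V \<noteq> h W" using inj V W VW by (meson inj_on_eq_iff)
  moreover have "cr (h V) (h W)" using cr_mono[OF c h(2)[OF V] h(2)[OF W]] .
  ultimately show False using nc h(1)[OF V] h(1)[OF W] unfolding ncr_def by blast
qed

lemma NCs_remove_single:
  assumes P: "P \<in> NCs S" and n: "{n} \<in> P"
  shows "P - {{n}} \<in> NCs (S - {n})"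
proof -
  have d: "\<forall>V\<in>P. \<forall>W\<in>P. V \<noteq> W \<longrightarrow> V \<inter> W = {}" and u: "\<Union>P = S" and e: "{} \<notin> P" and c: "ncr P"
    using P by (auto simp: NCs_iff)
  have "\<Union>(P - {{n}}) = S - {n}"
  proof
    show "\<Union>(P - {{n}}) \<subseteq> S - {n}"
    proof
      fix x assume "x \<in> \<Union>(P - {{n}})"
      then obtain V where V0: "V \<in> P - {{n}}" and V3: "x \<in> V" by (rule UnionE)
      then have V: "V \<in> P" "V \<noteq> {n}" "x \<in> V" by auto
      then have "V \<inter> {n} = {}" using d[rule_format, of V "{n}"] n by simp
      then show "x \<in> S - {n}" using V u by blast
    qed
    show "S - {n} \<subseteq> \<Union>(P - {{n}})" using u by blast
  qed
  then show ?thesis using d e ncr_subset[OF c] by (auto simp: NCs_iff)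
qed

lemma NCs_insert_single:
  assumes Q: "Q \<in> NCs (S - {n})" and nS: "n \<in> S"
  shows "insert {n} Q \<in> NCs S" "{n} \<notin> Q"
proof -
  have d: "\<forall>V\<in>Q. \<forall>W\<in>Q. V \<noteq> W \<longrightarrow> V \<inter> W = {}" and u: "\<Union>Q = S - {n}" and e: "{} \<notin> Q" and c: "ncr Q"
    using Q by (auto simp: NCs_iff)
  show "{n} \<notin> Q" using u by blast
  have "ncr (insert {n} Q)" using c unfolding ncr_def by (auto simp: cr_single1 cr_single2)
  moreover have "\<forall>V\<in>insert {n} Q. \<forall>W\<in>insert {n} Q. V \<noteq> W \<longrightarrow> V \<inter> W = {}"
    using d u by blast
  moreover have "\<Union>(insert {n} Q) = S" using u nS by blast
  ultimately show "insert {n} Q \<in> NCs S" using e by (auto simp: NCs_iff)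
qed


definition sp :: "nat \<Rightarrow> nat \<Rightarrow> nat set set \<Rightarrow> nat set set \<times> nat set set" where
  "sp n c P = (insert (blk P n - {n}) {V\<in>P. V \<subseteq> {..<c}}, {V\<in>P. V \<subseteq> {c<..<n}})"
definition jn :: "nat \<Rightarrow> nat \<Rightarrow> nat set set \<Rightarrow> nat set set \<Rightarrow> nat set set" where
  "jn n c P1 P2 = insert (insert n (blk P1 c)) ((P1 - {blk P1 c}) \<union> P2)"

locale maxblk =
  fixes S :: "nat set" and P :: "nat set set" and n c :: nat
  assumes P: "P \<in> NCs S" and fin: "finite S" and ne: "S \<noteq> {}" and n: "n = Max S"
    and nsing: "{n} \<notin> P" and c: "c = Max (blk P n - {n})"
begin

lemma nS: "n \<in> S" using fin ne n by simp
lemma le_n: "x \<in> S \<Longrightarrow> x \<le> n" using fin n by simp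
lemma d: "\<forall>V\<in>P. \<forall>W\<in>P. V \<noteq> W \<longrightarrow> V \<inter> W = {}" using P by (simp add: NCs_iff)
lemma dd: "V \<in> P \<Longrightarrow> W \<in> P \<Longrightarrow> V \<noteq> W \<Longrightarrow> V \<inter> W = {}" using d by blast
lemma u: "\<Union>P = S" using P by (simp add: NCs_iff)
lemma e: "{} \<notin> P" using P by (simp add: NCs_iff)
lemma nc: "ncr P" using P by (simp add: NCs_iff)
lemma B: "blk P n \<in> P" "n \<in> blk P n" using blk_in[OF P nS] by auto
lemma BS: "blk P n \<subseteq> S" using B u by blast
lemma B1ne: "blk P n - {n} \<noteq> {}"
proof
  assume "blk P n - {n} = {}"
  then have "blk P n = {n}" using B by blast
  then show False using B nsing by simp
qed
lemma B1fin: "finite (blk P n - {n})" using BS fin finite_subset by blast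
lemma cB1: "c \<in> blk P n - {n}" unfolding c by (rule Max_in[OF B1fin B1ne])
lemma c_ge: "x \<in> blk P n - {n} \<Longrightarrow> x \<le> c" using B1fin c by simp
lemma cn: "c < n"
proof -
  have "c \<in> S" "c \<noteq> n" using cB1 BS by auto
  then show ?thesis using le_n[of c] by simp
qed
lemma cS: "c \<in> S" using cB1 BS by blast

lemma straddle:
  assumes V: "V \<in> P" "V \<noteq> blk P n"
  shows "V \<subseteq> {..<c} \<or> V \<subseteq> {c<..<n}"
proof (rule ccontr)
  assume h: "\<not> (V \<subseteq> {..<c} \<or> V \<subseteq> {c<..<n})"
  then have "\<not> V \<subseteq> {..<c}" "\<not> V \<subseteq> {c<..<n}" by auto
  then obtain x y where x: "x \<in> V" "\<not> x < c" and y: "y \<in> V" "\<not> (c < y \<and> y < n)"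
    unfolding subset_iff lessThan_iff greaterThanLessThan_iff by blast
  have VB: "V \<inter> blk P n = {}" using d[rule_format, OF V(1) B(1) V(2)] .
  have cV: "c \<notin> V" using VB cB1 by blast
  have nV: "n \<notin> V" using VB B(2) by blast
  have xS: "x \<in> S" "y \<in> S" using u V(1) x(1) y(1) by blast+
  have xn: "x < n" using le_n[OF xS(1)] nV x(1) by (cases "x = n") auto
  have yn: "y < n" using le_n[OF xS(2)] nV y(1) by (cases "y = n") auto
  have cx: "c < x" using x cV by (cases "x = c") auto
  have yc: "y < c" using y yn cV by (cases "y = c") auto
  have "cr V (blk P n)" unfolding cr_def
    by (rule exI[of _ y], rule exI[of _ c], rule exI[of _ x], rule exI[of _ n])
       (use yc cx xn x(1) y(1) cB1 B(2) in auto)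
  then show False using nc V B unfolding ncr_def by blast
qed

lemma sp1: "fst (sp n c P) \<in> NCs {x\<in>S. x \<le> c}"
proof -
  let ?B1 = "blk P n - {n}"
  let ?Q = "{V\<in>P. V \<subseteq> {..<c}}"
  have Qne: "V \<noteq> blk P n" if "V \<in> ?Q" for V using that cB1 by auto
  have un: "\<Union>(insert ?B1 ?Q) = {x\<in>S. x \<le> c}"
  proof
    show "\<Union>(insert ?B1 ?Q) \<subseteq> {x\<in>S. x \<le> c}"
      using c_ge BS u by fastforce
    show "{x\<in>S. x \<le> c} \<subseteq> \<Union>(insert ?B1 ?Q)"
    proof
      fix x assume x: "x \<in> {x\<in>S. x \<le> c}"
      then obtain V where V: "V \<in> P" "x \<in> V" using u by blast
      show "x \<in> \<Union>(insert ?B1 ?Q)"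
      proof (cases "V = blk P n")
        case True
        then show ?thesis using V x cn by auto
      next
        case False
        then have "V \<subseteq> {..<c} \<or> V \<subseteq> {c<..<n}" using straddle V by blast
        then show ?thesis using V x by auto
      qed
    qed
  qed
  have dj: "\<forall>V\<in>insert ?B1 ?Q. \<forall>W\<in>insert ?B1 ?Q. V \<noteq> W \<longrightarrow> V \<inter> W = {}"
  proof (intro ballI impI)
    fix V W assume V: "V \<in> insert ?B1 ?Q" and W: "W \<in> insert ?B1 ?Q" and VW: "V \<noteq> W"
    show "V \<inter> W = {}"
    proof (cases "V = ?B1")
      case True
      then have WQ: "W \<in> ?Q" using W VW by auto
      then have "W \<in> P" "W \<noteq> blk P n" using Qne by auto
      then have "blk P n \<inter> W = {}" using dd[OF B(1)] by metis
      then show ?thesis using True by blast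
    next
      case False
      then have V': "V \<in> ?Q" using V by auto
      show ?thesis
      proof (cases "W = ?B1")
        case True
        have "V \<in> P" "V \<noteq> blk P n" using Qne V' by auto
        then have "blk P n \<inter> V = {}" using dd[OF B(1)] by metis
        then show ?thesis using True by blast
      next
        case False
        then have "W \<in> P" using W by auto
        then show ?thesis using V' VW dd by auto
      qed
    qed
  qed
  have em: "{} \<notin> insert ?B1 ?Q" using B1ne e by auto
  have ncq: "ncr (insert ?B1 ?Q)"
  proof (rule ncr_lift[OF nc, where h="\<lambda>V. if V = ?B1 then blk P n else V"])
    show "\<And>V. V \<in> insert ?B1 ?Q \<Longrightarrow> (if V = ?B1 then blk P n else V) \<in> P" using B by auto
    show "\<And>V. V \<in> insert ?B1 ?Q \<Longrightarrow> V \<subseteq> (if V = ?B1 then blk P n else V)" by auto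
    show "inj_on (\<lambda>V. if V = ?B1 then blk P n else V) (insert ?B1 ?Q)"
    proof (rule inj_onI)
      fix V W assume V: "V \<in> insert ?B1 ?Q" and W: "W \<in> insert ?B1 ?Q"
        and h: "(if V = ?B1 then blk P n else V) = (if W = ?B1 then blk P n else W)"
      show "V = W"
      proof (cases "V = ?B1")
        case True
        show ?thesis
        proof (rule ccontr)
          assume "V \<noteq> W"
          then have "W \<in> ?Q" "W \<noteq> ?B1" using W True by auto
          then have "W \<noteq> blk P n" using Qne by blast
          then show False using h True \<open>W \<noteq> ?B1\<close> by simp
        qed
      next
        case False
        then have "V \<in> ?Q" using V by auto
        then have "V \<noteq> blk P n" using Qne by blast
        show ?thesis
        proof (cases "W = ?B1")
          case True
          then show ?thesis using h False \<open>V \<noteq> blk P n\<close> by simp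
        next
          case False
          then show ?thesis using h \<open>V \<noteq> ?B1\<close> by simp
        qed
      qed
    qed
  qed
  show ?thesis unfolding sp_def fst_conv NCs_iff using un dj em ncq by blast
qed

lemma sp2: "snd (sp n c P) \<in> NCs {x\<in>S. c < x \<and> x < n}"
proof -
  let ?Q = "{V\<in>P. V \<subseteq> {c<..<n}}"
  have un: "\<Union>?Q = {x\<in>S. c < x \<and> x < n}"
  proof
    show "\<Union>?Q \<subseteq> {x\<in>S. c < x \<and> x < n}" using u by auto
    show "{x\<in>S. c < x \<and> x < n} \<subseteq> \<Union>?Q"
    proof
      fix x assume x: "x \<in> {x\<in>S. c < x \<and> x < n}"
      then obtain V where V: "V \<in> P" "x \<in> V" using u by blast
      have "V \<noteq> blk P n"
      proof
        assume "V = blk P n"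
        then have "x \<in> blk P n - {n}" using V x by auto
        then show False using c_ge x by force
      qed
      then have "V \<subseteq> {..<c} \<or> V \<subseteq> {c<..<n}" using straddle V by blast
      then show "x \<in> \<Union>?Q" using V x by auto
    qed
  qed
  have sQ: "?Q \<subseteq> P" by blast
  have ncQ: "ncr ?Q" by (rule ncr_subset[OF nc sQ])
  have dQ: "\<forall>V\<in>?Q. \<forall>W\<in>?Q. V \<noteq> W \<longrightarrow> V \<inter> W = {}" using dd by auto
  have eQ: "{} \<notin> ?Q" using e by auto
  show ?thesis unfolding sp_def snd_conv NCs_iff using un dQ eQ ncQ by (intro conjI)
qed

lemma jn_sp: "jn n c (fst (sp n c P)) (snd (sp n c P)) = P"
proof -
  let ?B1 = "blk P n - {n}"
  let ?Q = "{V\<in>P. V \<subseteq> {..<c}}"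
  have dj: "\<forall>V\<in>insert ?B1 ?Q. \<forall>W\<in>insert ?B1 ?Q. V \<noteq> W \<longrightarrow> V \<inter> W = {}"
    using sp1[unfolded sp_def fst_conv NCs_iff] by (elim conjE) assumption
  have b: "blk (insert ?B1 ?Q) c = ?B1" by (rule blk_eq[OF dj]) (use cB1 in auto)
  have q: "insert ?B1 ?Q - {?B1} = ?Q" using cB1 by auto
  have i: "insert n ?B1 = blk P n" using B by auto
  have "insert (blk P n) (?Q \<union> {V\<in>P. V \<subseteq> {c<..<n}}) = P"
  proof
    show "insert (blk P n) (?Q \<union> {V\<in>P. V \<subseteq> {c<..<n}}) \<subseteq> P" using B(1) by auto
    show "P \<subseteq> insert (blk P n) (?Q \<union> {V\<in>P. V \<subseteq> {c<..<n}})"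
    proof
      fix V assume V: "V \<in> P"
      show "V \<in> insert (blk P n) (?Q \<union> {V\<in>P. V \<subseteq> {c<..<n}})"
      proof (cases "V = blk P n")
        case True then show ?thesis by simp
      next
        case False
        then have "V \<subseteq> {..<c} \<or> V \<subseteq> {c<..<n}" using straddle[OF V] by simp
        then show ?thesis using V by simp
      qed
    qed
  qed
  then show ?thesis unfolding jn_def sp_def fst_conv snd_conv b q i .
qed

end

locale joinblk =
  fixes S :: "nat set" and P1 P2 :: "nat set set" and n c :: nat
  assumes P1: "P1 \<in> NCs {x\<in>S. x \<le> c}" and P2: "P2 \<in> NCs {x\<in>S. c < x \<and> x < n}"
    and fin: "finite S" and cS: "c \<in> S" and cn: "c < n" and n: "n = Max S"
begin

lemma nS: "n \<in> S" using fin cS n by (metis Max_in empty_iff)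
lemma le_n: "x \<in> S \<Longrightarrow> x \<le> n" using fin n by simp
lemma d1: "\<forall>V\<in>P1. \<forall>W\<in>P1. V \<noteq> W \<longrightarrow> V \<inter> W = {}" using P1 by (simp add: NCs_iff)
lemma u1: "\<Union>P1 = {x\<in>S. x \<le> c}" using P1 by (simp add: NCs_iff)
lemma e1: "{} \<notin> P1" using P1 by (simp add: NCs_iff)
lemma nc1: "ncr P1" using P1 by (simp add: NCs_iff)
lemma d2: "\<forall>V\<in>P2. \<forall>W\<in>P2. V \<noteq> W \<longrightarrow> V \<inter> W = {}" using P2 by (simp add: NCs_iff)
lemma u2: "\<Union>P2 = {x\<in>S. c < x \<and> x < n}" using P2 by (simp add: NCs_iff)
lemma e2: "{} \<notin> P2" using P2 by (simp add: NCs_iff)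
lemma nc2: "ncr P2" using P2 by (simp add: NCs_iff)

abbreviation "B1 \<equiv> blk P1 c"
lemma B1: "B1 \<in> P1" "c \<in> B1" using blk_in[OF P1] cS by auto
lemma inP1: "U \<in> P1 \<Longrightarrow> x \<in> U \<Longrightarrow> x \<in> S \<and> x \<le> c" using u1 by blast
lemma inP2: "W \<in> P2 \<Longrightarrow> x \<in> W \<Longrightarrow> x \<in> S \<and> c < x \<and> x < n" using u2 by blast
lemma cU: "U \<in> P1 \<Longrightarrow> U \<noteq> B1 \<Longrightarrow> c \<notin> U" using d1 B1 by blast

lemma jn_NCs: "jn n c P1 P2 \<in> NCs S"
proof -
  let ?B' = "insert n B1"
  have un: "\<Union>(jn n c P1 P2) = S"
  proof
    show "\<Union>(jn n c P1 P2) \<subseteq> S" unfolding jn_def using nS inP1 inP2 B1 by blast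
    show "S \<subseteq> \<Union>(jn n c P1 P2)"
    proof
      fix x assume x: "x \<in> S"
      consider "x = n" | "x \<le> c" | "c < x \<and> x < n" using le_n[OF x] by linarith
      then show "x \<in> \<Union>(jn n c P1 P2)"
      proof cases
        case 1 then show ?thesis unfolding jn_def by blast
      next
        case 2
        then obtain U where "U \<in> P1" "x \<in> U" using u1 x by blast
        then show ?thesis unfolding jn_def by blast
      next
        case 3
        then obtain W where "W \<in> P2" "x \<in> W" using u2 x by blast
        then show ?thesis unfolding jn_def by blast
      qed
    qed
  qed
  have dj: "\<forall>V\<in>jn n c P1 P2. \<forall>W\<in>jn n c P1 P2. V \<noteq> W \<longrightarrow> V \<inter> W = {}"
  proof -
    have a: "?B' \<inter> U = {}" if "U \<in> P1" "U \<noteq> B1" for U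
      using that d1 B1 inP1 cn by fastforce
    have b: "?B' \<inter> W = {}" if "W \<in> P2" for W
      using that inP2 inP1 B1 by fastforce
    have cc: "U \<inter> W = {}" if "U \<in> P1" "W \<in> P2" for U W
      using that inP2 inP1 by fastforce
    show ?thesis unfolding jn_def
    proof (intro ballI impI)
      fix V W assume V: "V \<in> insert ?B' ((P1 - {B1}) \<union> P2)" and W: "W \<in> insert ?B' ((P1 - {B1}) \<union> P2)"
        and VW: "V \<noteq> W"
      have V3: "V = ?B' \<or> (V \<in> P1 \<and> V \<noteq> B1) \<or> V \<in> P2" using V by blast
      have W3: "W = ?B' \<or> (W \<in> P1 \<and> W \<noteq> B1) \<or> W \<in> P2" using W by blast
      have dd1: "X \<inter> Y = {}" if "X \<in> P1" "Y \<in> P1" "X \<noteq> Y" for X Y using d1 that by blast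
      have dd2: "X \<inter> Y = {}" if "X \<in> P2" "Y \<in> P2" "X \<noteq> Y" for X Y using d2 that by blast
      show "V \<inter> W = {}"
        using V3 W3
      proof (elim disjE conjE)
        assume "V = ?B'" "W = ?B'" then show ?thesis using VW by simp
      next
        assume "V = ?B'" "W \<in> P1" "W \<noteq> B1" then show ?thesis using a by simp
      next
        assume "V = ?B'" "W \<in> P2" then show ?thesis using b by simp
      next
        assume "V \<in> P1" "V \<noteq> B1" "W = ?B'" then show ?thesis using a[of V] by (simp add: Int_commute)
      next
        assume "V \<in> P1" "V \<noteq> B1" "W \<in> P1" "W \<noteq> B1" then show ?thesis using dd1 VW by simp
      next
        assume "V \<in> P1" "V \<noteq> B1" "W \<in> P2" then show ?thesis using cc by simp
      next
        assume "V \<in> P2" "W = ?B'" then show ?thesis using b[of V] by (simp add: Int_commute)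
      next
        assume "V \<in> P2" "W \<in> P1" "W \<noteq> B1" then show ?thesis using cc[of W V] by (simp add: Int_commute)
      next
        assume "V \<in> P2" "W \<in> P2" then show ?thesis using dd2 VW by simp
      qed
    qed
  qed
  have em: "{} \<notin> jn n c P1 P2" unfolding jn_def using e1 e2 by auto
  have ncj: "ncr (jn n c P1 P2)" unfolding ncr_def
  proof (intro ballI impI)
    fix V W assume V: "V \<in> jn n c P1 P2" and W: "W \<in> jn n c P1 P2" and VW: "V \<noteq> W"
    show "\<not> cr V W"
    proof
      assume cVW: "cr V W"
      then obtain a b c' d where abcd: "a < b" "b < c'" "c' < d" "a \<in> V" "c' \<in> V" "b \<in> W" "d \<in> W"
        unfolding cr_def by blast
      have V3: "V = ?B' \<or> (V \<in> P1 \<and> V \<noteq> B1) \<or> V \<in> P2" using V unfolding jn_def by blast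
      have W3: "W = ?B' \<or> (W \<in> P1 \<and> W \<noteq> B1) \<or> W \<in> P2" using W unfolding jn_def by blast
      have ncr1: "\<not> cr X Y" if "X \<in> P1" "Y \<in> P1" "X \<noteq> Y" for X Y using nc1 that unfolding ncr_def by blast
      have ncr2: "\<not> cr X Y" if "X \<in> P2" "Y \<in> P2" "X \<noteq> Y" for X Y using nc2 that unfolding ncr_def by blast
      show False
      proof -
        { assume "V = ?B'" and W1: "W \<in> P1" "W \<noteq> B1"
          have "d \<le> c" using inP1[OF W1(1) abcd(7)] by simp
          then have "a \<noteq> n" "c' \<noteq> n" using abcd cn by auto
          then have "a \<in> B1" "c' \<in> B1" using abcd \<open>V = ?B'\<close> by auto
          then have "cr B1 W" unfolding cr_def using abcd by blast
          then have False using ncr1[OF B1(1) W1(1)] W1 by auto }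
        moreover
        { assume V1: "V \<in> P1" "V \<noteq> B1" and "W = ?B'"
          have "c' \<le> c" using inP1[OF V1(1) abcd(5)] by simp
          have "c' \<noteq> c" using cU[OF V1] abcd by auto
          have "b \<noteq> n" using abcd \<open>c' \<le> c\<close> cn by auto
          then have "b \<in> B1" using abcd \<open>W = ?B'\<close> by auto
          have "\<exists>d'. c' < d' \<and> d' \<in> B1"
          proof (cases "d = n")
            case True
            then show ?thesis using B1 \<open>c' \<le> c\<close> \<open>c' \<noteq> c\<close> by (intro exI[of _ c]) auto
          next
            case False
            then show ?thesis using abcd \<open>W = ?B'\<close> by auto
          qed
          then obtain d' where "c' < d'" "d' \<in> B1" by blast
          then have "cr V B1" unfolding cr_def using abcd \<open>b \<in> B1\<close> by blast
          then have False using ncr1[OF V1(1) B1(1)] V1 by auto }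
        moreover
        { assume "V = ?B'" and W2: "W \<in> P2"
          have "c < b" "d < n" using inP2[OF W2 abcd(6)] inP2[OF W2 abcd(7)] by auto
          then have "c' \<noteq> n" "c < c'" using abcd by auto
          then have "c' \<in> B1" using abcd \<open>V = ?B'\<close> by auto
          then have False using inP1[OF B1(1)] \<open>c < c'\<close> by force }
        moreover
        { assume V2: "V \<in> P2" and "W = ?B'"
          have "c < a" "c' < n" using inP2[OF V2 abcd(4)] inP2[OF V2 abcd(5)] by auto
          then have "b \<noteq> n" "c < b" using abcd by auto
          then have "b \<in> B1" using abcd \<open>W = ?B'\<close> by auto
          then have False using inP1[OF B1(1)] \<open>c < b\<close> by force }
        moreover
        { assume V1: "V \<in> P1" and W2: "W \<in> P2"
          have False using inP1[OF V1 abcd(5)] inP2[OF W2 abcd(6)] abcd by auto }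
        moreover
        { assume V2: "V \<in> P2" and W1: "W \<in> P1"
          have False using inP2[OF V2 abcd(4)] inP1[OF W1 abcd(6)] abcd by auto }
        moreover
        { assume "V \<in> P1" "W \<in> P1"
          then have False using ncr1 cVW VW by blast }
        moreover
        { assume "V \<in> P2" "W \<in> P2"
          then have False using ncr2 cVW VW by blast }
        ultimately show False using V3 W3 VW by blast
      qed
    qed
  qed
  show ?thesis unfolding NCs_iff using un dj em ncj by blast
qed

lemma jn_dj: "\<forall>V\<in>jn n c P1 P2. \<forall>W\<in>jn n c P1 P2. V \<noteq> W \<longrightarrow> V \<inter> W = {}"
  using jn_NCs by (simp add: NCs_iff)

lemma B'_notin: "insert n B1 \<notin> (P1 - {B1}) \<union> P2"
  using inP1 inP2 cn by fastforce

lemma n_notin_rest: "V \<in> (P1 - {B1}) \<union> P2 \<Longrightarrow> n \<notin> V"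
  using inP1 inP2 cn by fastforce

lemma jn_blk: "blk (jn n c P1 P2) n = insert n B1"
  by (rule blk_eq[OF jn_dj]) (auto simp: jn_def)

lemma jn_nsing: "{n} \<notin> jn n c P1 P2"
proof
  assume "{n} \<in> jn n c P1 P2"
  then have "{n} = insert n B1 \<or> {n} \<in> (P1 - {B1}) \<union> P2" unfolding jn_def by blast
  then show False using B1 cn n_notin_rest by auto
qed

lemma jn_c: "Max (blk (jn n c P1 P2) n - {n}) = c"
proof -
  have "blk (jn n c P1 P2) n - {n} = B1" unfolding jn_blk using inP1[OF B1(1)] cn by fastforce
  moreover have "finite B1" using inP1[OF B1(1)] fin by (meson finite_subset subsetI)
  ultimately show ?thesis using B1 inP1[OF B1(1)] by (simp add: Max_eqI)
qed

lemma P12_dj: "(P1 - {B1}) \<inter> P2 = {}"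
proof -
  have "V = {}" if "V \<in> P1" "V \<in> P2" for V using that inP1 inP2 by fastforce
  then show ?thesis using e1 by blast
qed

lemma sp_jn: "sp n c (jn n c P1 P2) = (P1, P2)"
proof -
  have a: "blk (jn n c P1 P2) n - {n} = B1" unfolding jn_blk using inP1[OF B1(1)] cn by fastforce
  have b: "{V \<in> jn n c P1 P2. V \<subseteq> {..<c}} = P1 - {B1}"
  proof
    show "{V \<in> jn n c P1 P2. V \<subseteq> {..<c}} \<subseteq> P1 - {B1}"
    proof
      fix V assume V: "V \<in> {V \<in> jn n c P1 P2. V \<subseteq> {..<c}}"
      then have "V \<noteq> insert n B1" using cn by auto
      moreover have "V \<notin> P2" using V e2 inP2 by (metis (no_types, lifting) ex_in_conv lessThan_iff mem_Collect_eq not_less_iff_gr_or_eq subsetD)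
      ultimately show "V \<in> P1 - {B1}" using V unfolding jn_def by blast
    qed
    show "P1 - {B1} \<subseteq> {V \<in> jn n c P1 P2. V \<subseteq> {..<c}}"
    proof
      fix V assume V: "V \<in> P1 - {B1}"
      then have "V \<subseteq> {..<c}" using inP1 cU by (metis DiffD1 DiffD2 le_neq_implies_less lessThan_iff singletonI subsetI)
      then show "V \<in> {V \<in> jn n c P1 P2. V \<subseteq> {..<c}}" using V unfolding jn_def by blast
    qed
  qed
  have c2: "{V \<in> jn n c P1 P2. V \<subseteq> {c<..<n}} = P2"
  proof
    show "{V \<in> jn n c P1 P2. V \<subseteq> {c<..<n}} \<subseteq> P2"
    proof
      fix V assume V: "V \<in> {V \<in> jn n c P1 P2. V \<subseteq> {c<..<n}}"
      then have "V \<noteq> insert n B1" by auto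
      moreover have "V \<notin> P1"
      proof
        assume "V \<in> P1"
        then have "V \<noteq> {}" using e1 by metis
        then obtain x where "x \<in> V" by blast
        then show False using inP1 \<open>V \<in> P1\<close> V by fastforce
      qed
      ultimately show "V \<in> P2" using V unfolding jn_def by blast
    qed
    show "P2 \<subseteq> {V \<in> jn n c P1 P2. V \<subseteq> {c<..<n}}" using inP2 unfolding jn_def by fastforce
  qed
  have "insert B1 (P1 - {B1}) = P1" using B1 by blast
  then show ?thesis unfolding sp_def a b c2 by simp
qed

end


lemma finite_part: "P \<in> NCs X \<Longrightarrow> finite X \<Longrightarrow> finite P"
proof -
  assume "P \<in> NCs X" "finite X"
  then have "P \<subseteq> Pow X" by (auto simp: NCs_iff)
  then show ?thesis using \<open>finite X\<close> by (meson finite_Pow_iff finite_subset)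
qed

lemma NC_peel:
  fixes f g :: "nat set \<Rightarrow> complex"
  assumes fin: "finite S" and ne: "S \<noteq> {}" and n: "n = Max S"
  shows "(\<Sum>P\<in>NCs S. g (blk P n) * (\<Prod>V\<in>P - {blk P n}. f V)) =
    g {n} * (\<Sum>Q\<in>NCs (S - {n}). \<Prod>V\<in>Q. f V) +
    (\<Sum>c\<in>S - {n}. (\<Sum>P1\<in>NCs {x\<in>S. x \<le> c}. g (insert n (blk P1 c)) * (\<Prod>V\<in>P1 - {blk P1 c}. f V)) *
       (\<Sum>P2\<in>NCs {x\<in>S. c < x \<and> x < n}. \<Prod>V\<in>P2. f V))"
proof -
  define Fw where "Fw P = g (blk P n) * (\<Prod>V\<in>P - {blk P n}. f V)" for P
  define A0 where "A0 = {P\<in>NCs S. {n} \<in> P}"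
  define A1 where "A1 = {P\<in>NCs S. {n} \<notin> P}"
  define cf where "cf P = Max (blk P n - {n})" for P
  have nS: "n \<in> S" using fin ne n by simp
  have finN: "finite (NCs S)" using finite_NCs[OF fin] .
  have split: "NCs S = A0 \<union> A1" unfolding A0_def A1_def by blast
  have "(\<Sum>P\<in>NCs S. Fw P) = (\<Sum>P\<in>A0. Fw P) + (\<Sum>P\<in>A1. Fw P)"
    unfolding split by (rule sum.union_disjoint) (use finN in \<open>auto simp: A0_def A1_def\<close>)
  also have "(\<Sum>P\<in>A0. Fw P) = (\<Sum>Q\<in>NCs (S - {n}). g {n} * (\<Prod>V\<in>Q. f V))"
  proof (rule sum.reindex_bij_witness[where i="insert {n}" and j="\<lambda>P. P - {{n}}"])
    fix P assume P: "P \<in> A0"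
    then show "insert {n} (P - {{n}}) = P" by (auto simp: A0_def)
    show "P - {{n}} \<in> NCs (S - {n})" using P NCs_remove_single by (auto simp: A0_def)
    have "blk P n = {n}" using P by (intro blk_eq) (auto simp: A0_def NCs_iff)
    then show "g {n} * (\<Prod>V\<in>P - {{n}}. f V) = Fw P" by (simp add: Fw_def)
  next
    fix Q assume Q: "Q \<in> NCs (S - {n})"
    show "insert {n} Q - {{n}} = Q" using NCs_insert_single(2)[OF Q nS] by simp
    show "insert {n} Q \<in> A0" using NCs_insert_single(1)[OF Q nS] by (simp add: A0_def)
  qed
  also have "(\<Sum>P\<in>A1. Fw P) = (\<Sum>c\<in>S - {n}. \<Sum>P\<in>{P\<in>A1. cf P = c}. Fw P)"
  proof (rule sum.group[symmetric])
    show "finite A1" using finN by (simp add: A1_def)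
    show "finite (S - {n})" using fin by simp
    show "cf ` A1 \<subseteq> S - {n}"
    proof
      fix y assume "y \<in> cf ` A1"
      then obtain P where PP: "P \<in> A1" "y = cf P" by blast
      interpret maxblk S P n "cf P" using PP fin ne n by unfold_locales (auto simp: A1_def cf_def)
      show "y \<in> S - {n}" unfolding PP(2) using cS cn by simp
    qed
  qed
  also have "\<dots> = (\<Sum>c\<in>S - {n}. (\<Sum>P1\<in>NCs {x\<in>S. x \<le> c}. g (insert n (blk P1 c)) * (\<Prod>V\<in>P1 - {blk P1 c}. f V)) *
       (\<Sum>P2\<in>NCs {x\<in>S. c < x \<and> x < n}. \<Prod>V\<in>P2. f V))"
  proof (rule sum.cong[OF refl])
    fix c assume c: "c \<in> S - {n}"
    have cn: "c < n" using c fin n by (simp add: order.not_eq_order_implies_strict)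
    have "(\<Sum>P\<in>{P\<in>A1. cf P = c}. Fw P) = (\<Sum>(P1, P2)\<in>NCs {x\<in>S. x \<le> c} \<times> NCs {x\<in>S. c < x \<and> x < n}.
        g (insert n (blk P1 c)) * (\<Prod>V\<in>P1 - {blk P1 c}. f V) * (\<Prod>V\<in>P2. f V))"
    proof (rule sum.reindex_bij_witness[where i="\<lambda>(P1, P2). jn n c P1 P2" and j="sp n c"])
      fix P assume PP: "P \<in> {P\<in>A1. cf P = c}"
      interpret maxblk S P n c using PP fin ne n by unfold_locales (auto simp: A1_def cf_def)
      have e: "sp n c P = (fst (sp n c P), snd (sp n c P))" by simp
      show "(case sp n c P of (P1, P2) \<Rightarrow> jn n c P1 P2) = P" using jn_sp by (simp add: case_prod_beta)
      show "sp n c P \<in> NCs {x\<in>S. x \<le> c} \<times> NCs {x\<in>S. c < x \<and> x < n}" using sp1 sp2 by (simp add: mem_Times_iff)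
      interpret jb: joinblk S "fst (sp n c P)" "snd (sp n c P)" n c
        using sp1 sp2 fin cS cn n by unfold_locales auto
      have fP1: "finite (fst (sp n c P))" using sp1 fin finite_part by simp
      have fP2: "finite (snd (sp n c P))" using sp2 fin finite_part by simp
      have Pj: "P = jn n c (fst (sp n c P)) (snd (sp n c P))" using jn_sp by simp
      have "Fw P = g (insert n (blk (fst (sp n c P)) c)) *
          (\<Prod>V\<in>(fst (sp n c P) - {blk (fst (sp n c P)) c}) \<union> snd (sp n c P). f V)"
      proof -
        have r: "P - {blk P n} = (fst (sp n c P) - {blk (fst (sp n c P)) c}) \<union> snd (sp n c P)"
          using Pj jb.jn_blk jb.B'_notin unfolding jn_def by (metis Diff_insert_absorb)
        have b: "blk P n = insert n (blk (fst (sp n c P)) c)" using Pj jb.jn_blk by metis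
        show ?thesis unfolding Fw_def r by (simp only: b)
      qed
      also have "\<dots> = g (insert n (blk (fst (sp n c P)) c)) * (\<Prod>V\<in>fst (sp n c P) - {blk (fst (sp n c P)) c}. f V) *
          (\<Prod>V\<in>snd (sp n c P). f V)"
        using fP1 fP2 jb.P12_dj by (simp add: prod.union_disjoint mult.assoc)
      finally show "(case sp n c P of (P1, P2) \<Rightarrow> g (insert n (blk P1 c)) * (\<Prod>V\<in>P1 - {blk P1 c}. f V) * (\<Prod>V\<in>P2. f V)) = Fw P"
        by (simp add: case_prod_beta)
    next
      fix b assume b: "b \<in> NCs {x\<in>S. x \<le> c} \<times> NCs {x\<in>S. c < x \<and> x < n}"
      obtain P1 P2 where bb: "b = (P1, P2)" by (cases b)
      interpret joinblk S P1 P2 n c using b bb fin c cn n by unfold_locales auto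
      show "sp n c (case b of (P1, P2) \<Rightarrow> jn n c P1 P2) = b" unfolding bb using sp_jn by simp
      show "(case b of (P1, P2) \<Rightarrow> jn n c P1 P2) \<in> {P\<in>A1. cf P = c}"
        unfolding bb using jn_NCs jn_nsing jn_c by (simp add: A1_def cf_def)
    qed
    also have "\<dots> = (\<Sum>P1\<in>NCs {x\<in>S. x \<le> c}. \<Sum>P2\<in>NCs {x\<in>S. c < x \<and> x < n}.
        g (insert n (blk P1 c)) * (\<Prod>V\<in>P1 - {blk P1 c}. f V) * (\<Prod>V\<in>P2. f V))"
      by (rule sum.cartesian_product[symmetric])
    also have "\<dots> = (\<Sum>P1\<in>NCs {x\<in>S. x \<le> c}. g (insert n (blk P1 c)) * (\<Prod>V\<in>P1 - {blk P1 c}. f V)) *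
       (\<Sum>P2\<in>NCs {x\<in>S. c < x \<and> x < n}. \<Prod>V\<in>P2. f V)"
      by (simp add: sum_product)
    finally show "(\<Sum>P\<in>{P\<in>A1. cf P = c}. Fw P) = (\<Sum>P1\<in>NCs {x\<in>S. x \<le> c}. g (insert n (blk P1 c)) * (\<Prod>V\<in>P1 - {blk P1 c}. f V)) *
       (\<Sum>P2\<in>NCs {x\<in>S. c < x \<and> x < n}. \<Prod>V\<in>P2. f V)" .
  qed
  finally show ?thesis by (simp add: Fw_def sum_distrib_left)
qed


lemma sum_Pow_min:
  fixes h :: "nat set \<Rightarrow> 'a::comm_monoid_add"
  assumes "finite X"
  shows "(\<Sum>T\<in>Pow X. h T) = h {} + (\<Sum>t\<in>X. \<Sum>T\<in>Pow {y\<in>X. t < y}. h (insert t T))"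
  using assms
proof (induct X rule: finite_linorder_min_induct)
  case empty
  then show ?case by simp
next
  case (insert b A)
  have bA: "b \<notin> A" using insert by auto
  have "(\<Sum>T\<in>Pow (insert b A). h T) = (\<Sum>T\<in>Pow A. h T) + (\<Sum>T\<in>insert b ` Pow A. h T)"
    unfolding Pow_insert by (rule sum.union_disjoint) (use insert bA in auto)
  also have "(\<Sum>T\<in>insert b ` Pow A. h T) = (\<Sum>T\<in>Pow A. h (insert b T))"
    by (rule sum.reindex_cong[where l="insert b"]) (use bA in \<open>auto simp: inj_on_def\<close>)
  also have "(\<Sum>T\<in>Pow A. h T) = h {} + (\<Sum>t\<in>A. \<Sum>T\<in>Pow {y\<in>A. t < y}. h (insert t T))"
    by (rule insert.hyps)
  also have "(\<Sum>t\<in>A. \<Sum>T\<in>Pow {y\<in>A. t < y}. h (insert t T)) =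
       (\<Sum>t\<in>A. \<Sum>T\<in>Pow {y\<in>insert b A. t < y}. h (insert t T))"
  proof (rule sum.cong[OF refl])
    fix t assume "t \<in> A"
    then have "{y\<in>A. t < y} = {y\<in>insert b A. t < y}" using insert by auto
    then show "(\<Sum>T\<in>Pow {y\<in>A. t < y}. h (insert t T)) = (\<Sum>T\<in>Pow {y\<in>insert b A. t < y}. h (insert t T))"
      by simp
  qed
  moreover have "{y\<in>insert b A. b < y} = A" using insert by auto
  ultimately show ?case using bA insert(1) by (simp add: add_ac)
qed

definition mfS :: "(nat set \<Rightarrow> complex) \<Rightarrow> nat set \<Rightarrow> complex" where
  "mfS f X = (\<Sum>P\<in>NCs X. \<Prod>V\<in>P. f V)"

definition Ef :: "(nat set \<Rightarrow> complex) \<Rightarrow> (nat set \<Rightarrow> complex) \<Rightarrow> nat set \<Rightarrow> nat \<Rightarrow> complex" where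
  "Ef f g X n = (\<Sum>T\<in>Pow (X - {n}). g (insert n T) * (\<Prod>x\<in>insert n T. mfS f (gapL X (insert n T) x)))"

lemma mfS_empty[simp]: "mfS f {} = 1"
  by (simp add: mfS_def NCs_empty)

lemma E_peel:
  assumes fin: "finite X" and ne: "X \<noteq> {}" and n: "n = Max X"
  shows "Ef f g X n = g {n} * mfS f (X - {n}) +
    (\<Sum>c\<in>X - {n}. Ef f (\<lambda>V. g (insert n V)) {x\<in>X. x \<le> c} c * mfS f {x\<in>X. c < x \<and> x < n})"
proof -
  have nX: "n \<in> X" using fin ne n by simp
  have le: "\<And>x. x \<in> X \<Longrightarrow> x \<le> n" using fin n by simp
  define h where "h T = g (insert n T) * (\<Prod>x\<in>insert n T. mfS f (gapL X (insert n T) x))" for T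
  have "Ef f g X n = h {} + (\<Sum>c\<in>X - {n}. \<Sum>T\<in>Pow {y\<in>X - {n}. y < c}. h (insert c T))"
    unfolding Ef_def h_def[symmetric] by (rule sum_Pow_max) (use fin in simp)
  also have "h {} = g {n} * mfS f (X - {n})"
  proof -
    have "gapL X {n} n = X - {n}" using le by (force simp: gapL_def)
    then show ?thesis by (simp add: h_def)
  qed
  also have "(\<Sum>c\<in>X - {n}. \<Sum>T\<in>Pow {y\<in>X - {n}. y < c}. h (insert c T)) =
      (\<Sum>c\<in>X - {n}. Ef f (\<lambda>V. g (insert n V)) {x\<in>X. x \<le> c} c * mfS f {x\<in>X. c < x \<and> x < n})"
  proof (rule sum.cong[OF refl])
    fix c assume c: "c \<in> X - {n}"
    have cn: "c < n" using c le by force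
    have e1: "{y\<in>X - {n}. y < c} = {x\<in>X. x \<le> c} - {c}" using cn by auto
    have "(\<Sum>T\<in>Pow {y\<in>X - {n}. y < c}. h (insert c T)) =
        (\<Sum>T\<in>Pow ({x\<in>X. x \<le> c} - {c}). g (insert n (insert c T)) *
          (\<Prod>x\<in>insert c T. mfS f (gapL {x\<in>X. x \<le> c} (insert c T) x))) * mfS f {x\<in>X. c < x \<and> x < n}"
      unfolding e1 sum_distrib_right
    proof (rule sum.cong[OF refl])
      fix T assume T: "T \<in> Pow ({x\<in>X. x \<le> c} - {c})"
      have "T \<subseteq> X" using T by auto
      then have fT: "finite T" using fin by (rule finite_subset)
      have nT: "n \<notin> insert c T" using T cn by auto
      have g1: "gapL X (insert n (insert c T)) n = {x\<in>X. c < x \<and> x < n}"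
      proof -
        have "\<And>t. t \<in> T \<Longrightarrow> t < c" using T by auto
        then show ?thesis unfolding gapL_def using cn le by (auto, meson less_trans)
      qed
      have g2: "gapL X (insert n (insert c T)) x = gapL {x\<in>X. x \<le> c} (insert c T) x" if "x \<in> insert c T" for x
      proof -
        have "x \<le> c" using that T by auto
        then show ?thesis unfolding gapL_def using cn by (intro set_eqI) auto
      qed
      have "(\<Prod>x\<in>insert n (insert c T). mfS f (gapL X (insert n (insert c T)) x)) =
          mfS f (gapL X (insert n (insert c T)) n) * (\<Prod>x\<in>insert c T. mfS f (gapL X (insert n (insert c T)) x))"
        using fT nT by simp
      also have "\<dots> = mfS f {x\<in>X. c < x \<and> x < n} * (\<Prod>x\<in>insert c T. mfS f (gapL {x\<in>X. x \<le> c} (insert c T) x))"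
        using g1 g2 by simp
      finally show "h (insert c T) = g (insert n (insert c T)) *
          (\<Prod>x\<in>insert c T. mfS f (gapL {x\<in>X. x \<le> c} (insert c T) x)) * mfS f {x\<in>X. c < x \<and> x < n}"
        unfolding h_def by (simp add: mult_ac)
    qed
    then show "(\<Sum>T\<in>Pow {y\<in>X - {n}. y < c}. h (insert c T)) =
      Ef f (\<lambda>V. g (insert n V)) {x\<in>X. x \<le> c} c * mfS f {x\<in>X. c < x \<and> x < n}"
      unfolding Ef_def by simp
  qed
  finally show ?thesis .
qed

lemma H_eq_E:
  assumes "finite X" "X \<noteq> {}" "n = Max X"
  shows "(\<Sum>P\<in>NCs X. g (blk P n) * (\<Prod>V\<in>P - {blk P n}. f V)) = Ef f g X n"
  using assms
proof (induct "card X" arbitrary: X g n rule: less_induct)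
  case less
  have fin: "finite X" and ne: "X \<noteq> {}" and n: "n = Max X" using less.prems by auto
  have le: "\<And>x. x \<in> X \<Longrightarrow> x \<le> n" using fin n by simp
  have nX: "n \<in> X" using fin ne n by simp
  have "(\<Sum>P\<in>NCs X. g (blk P n) * (\<Prod>V\<in>P - {blk P n}. f V)) =
    g {n} * mfS f (X - {n}) +
    (\<Sum>c\<in>X - {n}. (\<Sum>P1\<in>NCs {x\<in>X. x \<le> c}. g (insert n (blk P1 c)) * (\<Prod>V\<in>P1 - {blk P1 c}. f V)) *
       mfS f {x\<in>X. c < x \<and> x < n})"
    unfolding mfS_def by (rule NC_peel[OF fin ne n])
  also have "\<dots> = g {n} * mfS f (X - {n}) +
    (\<Sum>c\<in>X - {n}. Ef f (\<lambda>V. g (insert n V)) {x\<in>X. x \<le> c} c * mfS f {x\<in>X. c < x \<and> x < n})"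
  proof (intro arg_cong2[where f="(+)"] refl sum.cong)
    fix c assume c: "c \<in> X - {n}"
    have cn: "c < n" using c le by force
    have sub: "{x\<in>X. x \<le> c} \<subset> X"
    proof -
      have "n \<notin> {x\<in>X. x \<le> c}" using cn by simp
      then show ?thesis using nX by blast
    qed
    have card: "card {x\<in>X. x \<le> c} < card X" using psubset_card_mono[OF fin sub] .
    have mx: "c = Max {x\<in>X. x \<le> c}" using c fin by (intro Max_eqI[symmetric]) auto
    have "(\<Sum>P1\<in>NCs {x\<in>X. x \<le> c}. g (insert n (blk P1 c)) * (\<Prod>V\<in>P1 - {blk P1 c}. f V))
        = Ef f (\<lambda>V. g (insert n V)) {x\<in>X. x \<le> c} c"
      using less.hyps[OF card, of c "\<lambda>V. g (insert n V)"] fin c mx by auto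
    then show "(\<Sum>P1\<in>NCs {x\<in>X. x \<le> c}. g (insert n (blk P1 c)) * (\<Prod>V\<in>P1 - {blk P1 c}. f V)) *
       mfS f {x\<in>X. c < x \<and> x < n} = Ef f (\<lambda>V. g (insert n V)) {x\<in>X. x \<le> c} c * mfS f {x\<in>X. c < x \<and> x < n}"
      by simp
  qed
  also have "\<dots> = Ef f g X n" by (rule E_peel[OF fin ne n, symmetric])
  finally show ?case .
qed

lemma mfS_E:
  assumes fin: "finite X" and ne: "X \<noteq> {}" and n: "n = Max X"
  shows "mfS f X = Ef f f X n"
proof -
  have nX: "n \<in> X" using fin ne n by simp
  have "mfS f X = (\<Sum>P\<in>NCs X. f (blk P n) * (\<Prod>V\<in>P - {blk P n}. f V))"
    unfolding mfS_def
  proof (rule sum.cong[OF refl])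
    fix P assume P: "P \<in> NCs X"
    have bP: "blk P n \<in> P" using blk_in[OF P nX] by simp
    have fP: "finite P" using finite_part[OF P fin] .
    show "(\<Prod>V\<in>P. f V) = f (blk P n) * (\<Prod>V\<in>P - {blk P n}. f V)"
      by (rule prod.remove[OF fP bP])
  qed
  also have "\<dots> = Ef f f X n" by (rule H_eq_E[OF fin ne n])
  finally show ?thesis .
qed


context fk
begin

definition Kl :: "'b list \<Rightarrow> complex" where
  "Kl us = (if length us < 2 then 0 else \<phi> (hd us * Rprime \<Lambda> \<gamma> (butlast (tl us)) (last us)))"

end

context fkw
begin

definition Kset :: "nat set \<Rightarrow> complex" where "Kset V = Kl (nths ws V)"

lemma K_single: "n < length ws \<Longrightarrow> Kset {n} = 0"
  by (simp add: Kset_def Kl_def nths_single)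

lemma K_three:
  assumes pn: "p < n" and T: "\<forall>x\<in>T. p < x \<and> x < n" and nl: "n < length ws"
  shows "Kset (insert n (insert p T)) = \<phi> (ws ! p * RS T (ws ! n))"
proof -
  have e: "insert n (insert p T) = {p} \<union> (T \<union> {n})" by auto
  have u1: "nths ws ({p} \<union> (T \<union> {n})) = nths ws {p} @ nths ws (T \<union> {n})"
    by (rule nths_union) (use T pn in auto)
  have u2: "nths ws (T \<union> {n}) = nths ws T @ nths ws {n}"
    by (rule nths_union) (use T in auto)
  have "nths ws (insert n (insert p T)) = nths ws {p} @ (nths ws T @ nths ws {n})"
    unfolding e u1 u2 ..
  also have "\<dots> = [ws ! p] @ nths ws T @ [ws ! n]" using pn nl by (simp add: nths_single)
  finally have "nths ws (insert n (insert p T)) = ws ! p # (nths ws T @ [ws ! n])" by simp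
  then show ?thesis by (simp add: Kset_def Kl_def RS_def)
qed

theorem mfS_M:
  assumes "S \<subseteq> {..<length ws}"
  shows "mfS Kset S = M S"
  using assms
proof (induct "card S" arbitrary: S rule: less_induct)
  case less
  have S: "S \<subseteq> {..<length ws}" by (rule less.prems)
  have fin: "finite S" using S finite_subset by blast
  show ?case
  proof (cases "S = {}")
    case True
    then show ?thesis by simp
  next
    case False
    define n where "n = Max S"
    have nS: "n \<in> S" using fin False by (simp add: n_def)
    have le: "\<And>x. x \<in> S \<Longrightarrow> x \<le> n" using fin by (simp add: n_def)
    have nl: "n < length ws" using nS S by auto
    have IH: "mfS Kset Z = M Z" if "Z \<subseteq> S" "n \<notin> Z" for Z
    proof -
      have "Z \<subset> S" using that nS by blast
      then have "card Z < card S" using fin by (rule psubset_card_mono[rotated])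
      moreover have "Z \<subseteq> {..<length ws}" using that S by auto
      ultimately show ?thesis using less.hyps by blast
    qed
    define h where "h T = Kset (insert n T) * (\<Prod>x\<in>insert n T. mfS Kset (gapL S (insert n T) x))" for T
    have "mfS Kset S = (\<Sum>T\<in>Pow (S - {n}). h T)"
      unfolding h_def using mfS_E[OF fin False n_def] by (simp add: Ef_def)
    also have "\<dots> = h {} + (\<Sum>p\<in>S - {n}. \<Sum>T\<in>Pow {y\<in>S - {n}. p < y}. h (insert p T))"
      by (rule sum_Pow_min) (use fin in simp)
    also have "h {} = 0" by (simp add: h_def K_single[OF nl])
    also have "(\<Sum>p\<in>S - {n}. \<Sum>T\<in>Pow {y\<in>S - {n}. p < y}. h (insert p T)) =
       (\<Sum>p\<in>S - {n}. \<phi> (ws ! p * OpS {x\<in>S. p < x \<and> x < n} (ws ! n)) * M {x\<in>S. x < p})"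
    proof (rule sum.cong[OF refl])
      fix p assume p: "p \<in> S - {n}"
      have pn: "p < n" using p le by force
      define Gp where "Gp = {x\<in>S. p < x \<and> x < n}"
      have eG: "{y\<in>S - {n}. p < y} = Gp" using le by (force simp: Gp_def)
      have GpS: "Gp \<subseteq> {..<length ws}" using S by (auto simp: Gp_def)
      have "(\<Sum>T\<in>Pow Gp. h (insert p T)) = (\<Sum>T\<in>Pow Gp. M {x\<in>S. x < p} * (cw Gp T * \<phi> (ws ! p * RS T (ws ! n))))"
      proof (rule sum.cong[OF refl])
        fix T assume T: "T \<in> Pow Gp"
        have Tp: "\<forall>x\<in>T. p < x \<and> x < n" using T by (auto simp: Gp_def)
        have fT: "finite T" using T fin finite_subset by (metis PowD Gp_def mem_Collect_eq subsetI finite_Collect_conjI)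
        define V where "V = insert n (insert p T)"
        have nn: "n \<notin> insert p T" using Tp pn by auto
        have pT: "p \<notin> T" using Tp by auto
        have g1: "gapL S V n = above Gp T"
          unfolding gapL_def above_def V_def Gp_def using Tp pn by (intro set_eqI) auto
        have g2: "gapL S V p = {x\<in>S. x < p}"
          unfolding gapL_def V_def using Tp pn by (intro set_eqI) auto
        have g3: "gapL S V x = gapL Gp T x" if "x \<in> T" for x
          unfolding gapL_def V_def Gp_def using Tp pn that by (intro set_eqI) auto
        have m1: "mfS Kset (above Gp T) = M (above Gp T)"
          by (rule IH) (auto simp: above_def Gp_def)
        have m2: "mfS Kset {x\<in>S. x < p} = M {x\<in>S. x < p}"
          by (rule IH) (use pn in auto)
        have m3: "mfS Kset (gapL Gp T x) = M (gapL Gp T x)" for x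
          by (rule IH) (auto simp: gapL_def Gp_def)
        have "(\<Prod>x\<in>V. mfS Kset (gapL S V x)) =
            mfS Kset (gapL S V n) * (mfS Kset (gapL S V p) * (\<Prod>x\<in>T. mfS Kset (gapL S V x)))"
          unfolding V_def using fT nn pT by simp
        also have "\<dots> = M (above Gp T) * (M {x\<in>S. x < p} * (\<Prod>x\<in>T. M (gapL Gp T x)))"
          using g1 g2 g3 m1 m2 m3 by simp
        finally have pr: "(\<Prod>x\<in>V. mfS Kset (gapL S V x)) = M {x\<in>S. x < p} * cw Gp T"
          by (simp add: cw_def mult_ac)
        have k: "Kset V = \<phi> (ws ! p * RS T (ws ! n))" unfolding V_def by (rule K_three[OF pn Tp nl])
        show "h (insert p T) = M {x\<in>S. x < p} * (cw Gp T * \<phi> (ws ! p * RS T (ws ! n)))"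
          unfolding h_def V_def[symmetric] k pr by (simp add: mult_ac)
      qed
      also have "\<dots> = M {x\<in>S. x < p} * \<phi> (ws ! p * Gh Gp (ws ! n))"
        by (simp add: Gh_def sum_distrib_left phi_sum smul_mult_right phi_smul)
      also have "\<dots> = \<phi> (ws ! p * OpS Gp (ws ! n)) * M {x\<in>S. x < p}"
        by (simp add: OpS_Gh[OF GpS])
      finally show "(\<Sum>T\<in>Pow {y\<in>S - {n}. p < y}. h (insert p T)) =
         \<phi> (ws ! p * OpS {x\<in>S. p < x \<and> x < n} (ws ! n)) * M {x\<in>S. x < p}"
        unfolding eG Gp_def .
    qed
    also have "\<dots> = M S" by (rule M_rec[OF False S n_def, symmetric])
    finally show ?thesis by simp
  qed
qed

end


lemma NC_single_block:
  assumes P: "P \<in> NCs {0..<n}" and V: "V \<in> P" and ne: "P \<noteq> {{0..<n}}"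
  shows "V \<noteq> {}" "V \<subseteq> {0..<n}" "V \<noteq> {0..<n}"
proof -
  have u: "\<Union>P = {0..<n}" and d: "\<forall>V\<in>P. \<forall>W\<in>P. V \<noteq> W \<longrightarrow> V \<inter> W = {}" and e: "{} \<notin> P"
    using P by (auto simp: NCs_iff)
  show "V \<noteq> {}" using e V by auto
  show "V \<subseteq> {0..<n}" using u V by auto
  show "V \<noteq> {0..<n}"
  proof
    assume Vn: "V = {0..<n}"
    have "P = {V}"
    proof
      show "{V} \<subseteq> P" using V by simp
      show "P \<subseteq> {V}"
      proof
        fix W assume W: "W \<in> P"
        show "W \<in> {V}"
        proof (rule ccontr)
          assume "W \<notin> {V}"
          then have "W \<inter> V = {}" using d W V by auto
          moreover have "W \<subseteq> V" using u W Vn by auto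
          ultimately have "W = {}" by auto
          then show False using e W by simp
        qed
      qed
    qed
    then show False using ne Vn by simp
  qed
qed

lemma final_key:
  assumes fk: "fk smul star \<phi> \<gamma> \<Lambda>"
    and cumulants: "\<forall>Ys. Ys \<noteq> [] \<longrightarrow>
        psi smul star \<gamma> \<phi> (foldr (\<circ>) Ys id) = (\<Sum>P\<in>NC (length Ys). \<Prod>V\<in>P. R (nths Ys V))"
  shows "vs \<noteq> [] \<Longrightarrow> R (map (Xop smul \<gamma> \<phi> \<Lambda>) vs) = fk.Kl \<phi> \<gamma> \<Lambda> vs"
proof (induct "length vs" arbitrary: vs rule: less_induct)
  case less
  interpret fkw smul star \<phi> \<gamma> \<Lambda> vs using fk by (simp add: fkw_def)
  define n where "n = length vs"
  have n0: "0 < n" using less.prems by (simp add: n_def)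
  have IH: "R (map Xo ys) = Kl ys" if "ys \<noteq> []" "length ys < n" for ys
    using less.hyps that by (simp add: n_def)
  define P0 where "P0 = {{0..<n::nat}}"
  have P0NC: "P0 \<in> NC n"
    unfolding NC_NCs NCs_def P0_def ncr_def using n0 by (auto intro: partition_on_space)
  have finNC: "finite (NC n)" unfolding NC_NCs by (rule finite_NCs) simp
  have nths_all': "nths vs {0..<n} = vs" by (simp add: n_def atLeast0LessThan)
  have "psi smul star \<gamma> \<phi> (foldr (\<circ>) (map Xo vs) id) = M {0..<n}"
    by (simp add: psi_def M_def F_def Fv_def vac_def nths_all')
  also have "\<dots> = mfS Kset {0..<n}" by (rule mfS_M[symmetric]) (auto simp: n_def)
  also have "\<dots> = (\<Sum>P\<in>NC n. \<Prod>V\<in>P. Kl (nths vs V))" by (simp add: mfS_def Kset_def NC_NCs)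
  finally have m: "psi smul star \<gamma> \<phi> (foldr (\<circ>) (map Xo vs) id) = (\<Sum>P\<in>NC n. \<Prod>V\<in>P. Kl (nths vs V))" .
  have c: "psi smul star \<gamma> \<phi> (foldr (\<circ>) (map Xo vs) id) = (\<Sum>P\<in>NC n. \<Prod>V\<in>P. R (map Xo (nths vs V)))"
    using cumulants[rule_format, of "map Xo vs"] less.prems by (simp add: n_def nths_map)
  have rest: "(\<Sum>P\<in>NC n - {P0}. \<Prod>V\<in>P. R (map Xo (nths vs V))) = (\<Sum>P\<in>NC n - {P0}. \<Prod>V\<in>P. Kl (nths vs V))"
  proof (rule sum.cong[OF refl], rule prod.cong[OF refl])
    fix P V assume P: "P \<in> NC n - {P0}" and V: "V \<in> P"
    have PP: "P \<in> NCs {0..<n}" "P \<noteq> {{0..<n}}" using P by (auto simp: NC_NCs P0_def)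
    note b = NC_single_block[OF PP(1) V PP(2)]
    have "card V < n"
    proof -
      have "V \<subset> {0..<n}" using b by auto
      then show ?thesis using psubset_card_mono[of "{0..<n}" V] by simp
    qed
    moreover have "length (nths vs V) = card V" using b by (intro nths_length) (auto simp: n_def)
    moreover have "card V \<noteq> 0" using b finite_subset[OF b(2)] by auto
    ultimately show "R (map Xo (nths vs V)) = Kl (nths vs V)" by (intro IH) auto
  qed
  have s1: "(\<Sum>P\<in>NC n. \<Prod>V\<in>P. R (map Xo (nths vs V))) = R (map Xo vs) + (\<Sum>P\<in>NC n - {P0}. \<Prod>V\<in>P. R (map Xo (nths vs V)))"
    using sum.remove[OF finNC P0NC, of "\<lambda>P. \<Prod>V\<in>P. R (map Xo (nths vs V))"] by (simp add: P0_def nths_all')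
  have s2: "(\<Sum>P\<in>NC n. \<Prod>V\<in>P. Kl (nths vs V)) = Kl vs + (\<Sum>P\<in>NC n - {P0}. \<Prod>V\<in>P. Kl (nths vs V))"
    using sum.remove[OF finNC P0NC, of "\<lambda>P. \<Prod>V\<in>P. Kl (nths vs V)"] by (simp add: P0_def nths_all')
  show ?case using m c s1 s2 rest by simp
qed

theorem lemma3p11:
  fixes smul :: "complex \<Rightarrow> 'b::ring_1 \<Rightarrow> 'b"
    and star :: "'b \<Rightarrow> 'b"
    and \<phi> :: "'b \<Rightarrow> complex"
    and \<gamma> :: "'b \<Rightarrow> 'b"
    and \<Lambda> :: "'b \<Rightarrow> 'b \<Rightarrow> 'b"
    and R :: "('b fvec \<Rightarrow> 'b fvec) list \<Rightarrow> complex"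
    and u1 un :: 'b
    and us :: "'b list"
  assumes alg: "unital_star_algebra smul star"
    and phi_lin: "star_linear_functional smul star \<phi>"
    and gamma_lin: "star_linear_map smul star \<gamma>"
    and Lambda_lin: "star_bilinear_map smul star \<Lambda>"
    and phi_pos: "positive_faithful star \<phi>"
    and cp: "completely_positive star (gp smul \<gamma> \<phi>)"
    and sym_phi: "\<forall>b u v. \<phi> (star v * \<Lambda> b u) = \<phi> (star (\<Lambda> (star b) v) * u)"
    and sym_gamma: "\<forall>b u v. \<gamma> (star v * \<Lambda> b u) = \<gamma> (star (\<Lambda> (star b) v) * u)"
    and cumulants: "\<forall>Ys. Ys \<noteq> [] \<longrightarrow>
        psi smul star \<gamma> \<phi> (foldr (\<circ>) Ys id) = (\<Sum>P\<in>NC (length Ys). \<Prod>V\<in>P. R (nths Ys V))"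
  shows "R (map (Xop smul \<gamma> \<phi> \<Lambda>) (u1 # us @ [un]))
           = ip_phi star \<phi> (Rprime \<Lambda> \<gamma> us un) (star u1)
       \<and> ip_phi star \<phi> (Rprime \<Lambda> \<gamma> us un) (star u1) = \<phi> (u1 * Rprime \<Lambda> \<gamma> us un)"
proof -
  have fk: "fk smul star \<phi> \<gamma> \<Lambda>" using alg phi_lin gamma_lin Lambda_lin by (rule fk.intro)
  interpret fk smul star \<phi> \<gamma> \<Lambda> by (rule fk)
  have k: "R (map Xo (u1 # us @ [un])) = Kl (u1 # us @ [un])"
    by (rule final_key[OF fk cumulants]) simp
  have kl: "Kl (u1 # us @ [un]) = \<phi> (u1 * Rprime \<Lambda> \<gamma> us un)" by (simp add: Kl_def)
  have ip: "ip_phi star \<phi> (Rprime \<Lambda> \<gamma> us un) (star u1) = \<phi> (u1 * Rprime \<Lambda> \<gamma> us un)"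
    by (simp add: ip_phi_def)
  show ?thesis using k kl ip by simp
qed


end
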